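(* Let $T=(V,L)$ be a substrate tree with capacities $c_h$ and bandwidths $b_v$ as described in the context, and let $\mathcal{J}=\langle N,B\rangle$ be a request. Then Algorithm 1 (the dynamic program described in the context) returns an optimal solution of the Survivable Virtual Cluster Embedding Problem (an SVCE of $\mathcal{J}$ using the minimum total number of VM slots $\sum_{h\in H}\mathcal{C}_s(h)$) if the instance is feasible (i.e. some SVCE of $\mathcal{J}$ exists), and returns "Infeasible" otherwise.
   Context: Substrate: an undirected tree $T=(V,L)$ with $V=H\cup S$ (disjoint), where $H$ is the set of physical machines (PMs), which are exactly the leaves, and $S$ is the set of switches (internal nodes). The tree is rooted at a fixed node $r\in S$. For $v\in V$, $T_v$ is the subtree rooted at $v$, $l_v$ is the out-bound link of $T_v$ (the link from $v$ to its parent; the root has none), and $d_v$ is the number of children of $v$, which are ordered $u_1,\dots,u_{d_v}$. Each PM $h$ has $c_h\in\mathbb{Z}_{\ge0}$ available VM slots; each non-root node $v$ has available bandwidth $b_v\ge 0$ on $l_v$ (for the root we use the convention $b_r=+\infty$). A request is $\mathcal{J}=\langle N,B\rangle$ with $N$ a positive integer (number of VMs) and $B>0$ (per-VM bandwidth). VCE: given a tree with PM capacities $c_h$ and link bandwidths $b_v$, a virtual cluster embedding of $\langle N,B\rangle$ is a function $\mathcal{C}:H\to\mathbb{Z}_{\ge 0}$ with $\mathcal{C}(h)\le c_h$ for all $h$, $\sum_{h\in H}\mathcal{C}(h)=N$, and $\min\{n_v,N-n_v\}\cdot B\le b_v$ for every link $l_v$, where $n_v=\sum_{h\in H\cap T_v}\mathcal{C}(h)$.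 SVCE: a pair $(\mathcal{C}_s,\mathcal{B}_s)$ with $\mathcal{C}_s:H\to\mathbb{Z}_{\ge0}$, $\mathcal{C}_s(h)\le c_h$, and $\mathcal{B}_s:L\to\mathbb{R}_{\ge 0}$, $\mathcal{B}_s(l_v)\le b_v$, such that for every PM $F\in H$ there exists a VCE of $\mathcal{J}$ in the tree $(V\setminus\{F\},L\setminus\{l_F\})$ whose PM capacities are $\mathcal{C}_s(h)$ ($h\ne F$) and whose link bandwidths are $\mathcal{B}_s(l_v)$. The Survivable Virtual Cluster Embedding Problem (SVCEP) asks for an SVCE minimizing $\sum_{h\in H}\mathcal{C}_s(h)$. Notation: $\Lambda_v=\big([0,b_v/B]\cup[N-b_v/B,N]\big)\cap[0,N]$, $\overline\Lambda_v=[0,N]\setminus\Lambda_v$, and, when $N-b_v/B>N/2$, $\lambda_v=\lceil N-b_v/B\rceil$ (this is the case whenever $\overline\Lambda_v\neq\emptyset$). For $x\in\{0,\dots,N\}$ let $m_v(x)=x$ if $x\in\Lambda_v$ and $m_v(x)=\lambda_v$ if $x\in\overline\Lambda_v$. Algorithm 1: processing nodes bottom-up, it computes tables indexed by $n_0,n_1\in\{0,\dots,N\}$. For a PM $h$: $N_h[n_0,n_1]=n_0$ if $n_1=0$ and $n_0\in[0,c_h]\cap\Lambda_h$; $N_h[n_0,n_1]=\lambda_h$ if $n_1=0$, $n_0\in\overline\Lambda_h$ and $\lambda_h\le c_h$; and $N_h[n_0,n_1]=\infty$ otherwise. For a switch $v$: $N'_v[n_0,n_1,0]=0$ if $n_0=n_1=0$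 and $\infty$ otherwise; for $k=1,\dots,d_v$, $N'_v[n_0,n_1,k]=\min\{N'_v[n_0',n_1',k-1]+N_{u_k}[n_0'',n_1'']\}$, the minimum over $n_0',n_1',n_0'',n_1''\in\{0,\dots,N\}$ with $n_0'+n_0''\ge n_0$ and $\min\{n_0'+n_1'',\,n_0''+n_1'\}\ge n_1$; finally $N_v[n_0,n_1]=N'_v[m_v(n_0),m_v(n_1),d_v]$. ($N_v[n_0,n_1]$ is intended as the minimum number of VMs to place in $T_v$ so that $T_v$ offers at least $n_0$ working VMs with no failure and at least $n_1$ working VMs under any single-PM failure in $T_v$, respecting bandwidths.) If $N_r[N,N]=\infty$ the algorithm returns "Infeasible"; otherwise it backtracks through the minimizing choices to obtain the VM allocation $\mathcal{C}_s(h)$ for each PM and sets each $\mathcal{B}_s(l_v)$ to the hose-model bandwidth $B\cdot\max\{\min\{a_0,N-a_0\},\min\{a_1,N-a_1\}\}$ determined by the numbers $a_0,a_1$ of working VMs chosen for $T_v$, and returns $(\mathcal{C}_s,\mathcal{B}_s)$. *)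

theory Defs
  imports Complex_Main "HOL-Library.Extended_Nat"
begin

text \<open>PM c b is a physical machine (a leaf) with c available VM slots
  and available bandwidth b on its out-bound link; Switch b ts is a switch whose
  out-bound link has bandwidth b and whose ordered children are ts.  The bandwidth
  stored at the root is ignored (convention b_r = infinity).  Nodes are identified by
  their positions (paths of child indices, 0-based) from the root; the empty path is
  the root r.\<close>

datatype stree = PM nat real | Switch real "stree list"

fun valid :: "stree \<Rightarrow> nat list \<Rightarrow> bool" where
  "valid t [] = True"
| "valid (PM c b) (i # p) = False"
| "valid (Switch b ts) (i # p) = (i < length ts \<and> valid (ts ! i) p)"

fun subtree :: "stree \<Rightarrow> nat list \<Rightarrow> stree" where
  "subtree t [] = t"
| "subtree (PM c b) (i # p) = PM c b"
| "subtree (Switch b ts) (i # p) = subtree (ts ! i) p"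

fun is_pm :: "stree \<Rightarrow> bool" where
  "is_pm (PM c b) = True"
| "is_pm (Switch b ts) = False"

fun bw_of :: "stree \<Rightarrow> real" where
  "bw_of (PM c b) = b"
| "bw_of (Switch b ts) = b"

fun cap_of :: "stree \<Rightarrow> nat" where
  "cap_of (PM c b) = c"
| "cap_of (Switch b ts) = 0"

text \<open>V: all nodes; H: the PMs (leaves); links are identified with their lower end
  (every non-root node v has the out-bound link l_v).\<close>
definition nodes :: "stree \<Rightarrow> nat list set" where
  "nodes t = {p. valid t p}"

definition pms :: "stree \<Rightarrow> nat list set" where
  "pms t = {p. valid t p \<and> is_pm (subtree t p)}"

definition cap :: "stree \<Rightarrow> nat list \<Rightarrow> nat" where
  "cap t h = cap_of (subtree t h)"

definition bw :: "stree \<Rightarrow> nat list \<Rightarrow> real" where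
  "bw t v = bw_of (subtree t v)"

definition wf_substrate :: "stree \<Rightarrow> bool" where
  "wf_substrate t \<longleftrightarrow> \<not> is_pm t \<and>
     (\<forall>p \<in> nodes t. (\<forall>b ts. subtree t p = Switch b ts \<longrightarrow> ts \<noteq> []) \<and>
                     (p \<noteq> [] \<longrightarrow> 0 \<le> bw t p))"

text \<open>Generic VCE on a tree with PM set Hs, link set Ls (given by their lower nodes),
  PM capacities capf and link bandwidths bwf.  n_v counts the VMs in T_v, i.e. on PMs
  of Hs whose path extends v.\<close>
definition vce :: "nat \<Rightarrow> real \<Rightarrow> nat list set \<Rightarrow> nat list set \<Rightarrow>
    (nat list \<Rightarrow> nat) \<Rightarrow> (nat list \<Rightarrow> real) \<Rightarrow> (nat list \<Rightarrow> nat) \<Rightarrow> bool" where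
  "vce N B Hs Ls capf bwf C \<longleftrightarrow>
     (\<forall>h \<in> Hs. C h \<le> capf h) \<and> (\<Sum>h \<in> Hs. C h) = N \<and>
     (\<forall>v \<in> Ls. let nv = (\<Sum>h \<in> {h \<in> Hs. \<exists>q. h = v @ q}. C h) in
         min (real nv) (real N - real nv) * B \<le> bwf v)"

text \<open>SVCE of request (N,B) in substrate t: the failure of PM F removes F and l_F.\<close>
definition is_svce :: "nat \<Rightarrow> real \<Rightarrow> stree \<Rightarrow> (nat list \<Rightarrow> nat) \<Rightarrow> (nat list \<Rightarrow> real) \<Rightarrow> bool" where
  "is_svce N B t Cs Bs \<longleftrightarrow>
     (\<forall>h \<in> pms t. Cs h \<le> cap t h) \<and>
     (\<forall>v \<in> nodes t - {[]}. 0 \<le> Bs v \<and> Bs v \<le> bw t v) \<and>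
     (\<forall>F \<in> pms t. \<exists>C. vce N B (pms t - {F}) (nodes t - {[], F}) Cs Bs C)"

definition optimal_svce :: "nat \<Rightarrow> real \<Rightarrow> stree \<Rightarrow> (nat list \<Rightarrow> nat) \<Rightarrow> (nat list \<Rightarrow> real) \<Rightarrow> bool" where
  "optimal_svce N B t Cs Bs \<longleftrightarrow> is_svce N B t Cs Bs \<and>
     (\<forall>Cs' Bs'. is_svce N B t Cs' Bs' \<longrightarrow> (\<Sum>h \<in> pms t. Cs h) \<le> (\<Sum>h \<in> pms t. Cs' h))"

definition inLam :: "nat \<Rightarrow> real \<Rightarrow> real \<Rightarrow> nat \<Rightarrow> bool" where
  "inLam N B b x \<longleftrightarrow> real x \<le> b / B \<or> real N - b / B \<le> real x"

definition lam :: "nat \<Rightarrow> real \<Rightarrow> real \<Rightarrow> nat" where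
  "lam N B b = nat \<lceil>real N - b / B\<rceil>"

definition mv :: "nat \<Rightarrow> real \<Rightarrow> real \<Rightarrow> nat \<Rightarrow> nat" where
  "mv N B b x = (if inLam N B b x then x else lam N B b)"

text \<open>Table of a PM with c slots and out-bound bandwidth b (\<infinity> = infeasible).\<close>
definition leaf_tbl :: "nat \<Rightarrow> real \<Rightarrow> nat \<Rightarrow> real \<Rightarrow> nat \<Rightarrow> nat \<Rightarrow> enat" where
  "leaf_tbl N B c b n0 n1 =
     (if n1 = 0 \<and> n0 \<le> c \<and> inLam N B b n0 then enat n0
      else if n1 = 0 \<and> \<not> inLam N B b n0 \<and> lam N B b \<le> c then enat (lam N B b)
      else \<infinity>)"

definition init_tbl :: "nat \<Rightarrow> nat \<Rightarrow> enat" where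
  "init_tbl n0 n1 = (if n0 = 0 \<and> n1 = 0 then 0 else \<infinity>)"

text \<open>One step N'_v[.,.,k] from N'_v[.,.,k-1] (= P) and N_{u_k} (= Q); minimum of the
  empty set is \<infinity>.\<close>
definition combine :: "nat \<Rightarrow> (nat \<Rightarrow> nat \<Rightarrow> enat) \<Rightarrow> (nat \<Rightarrow> nat \<Rightarrow> enat) \<Rightarrow> nat \<Rightarrow> nat \<Rightarrow> enat" where
  "combine N P Q n0 n1 =
     (INF x \<in> {(a0, a1, b0, b1). a0 \<le> N \<and> a1 \<le> N \<and> b0 \<le> N \<and> b1 \<le> N \<and>
                  n0 \<le> a0 + b0 \<and> n1 \<le> min (a0 + b1) (b0 + a1)}.
        (case x of (a0, a1, b0, b1) \<Rightarrow> P a0 a1 + Q b0 b1))"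

fun dp :: "nat \<Rightarrow> real \<Rightarrow> stree \<Rightarrow> nat \<Rightarrow> nat \<Rightarrow> enat" where
  "dp N B (PM c b) = leaf_tbl N B c b"
| "dp N B (Switch b ts) =
     (\<lambda>n0 n1. foldl (combine N) init_tbl (map (dp N B) ts) (mv N B b n0) (mv N B b n1))"

definition partial :: "nat \<Rightarrow> real \<Rightarrow> stree list \<Rightarrow> nat \<Rightarrow> nat \<Rightarrow> nat \<Rightarrow> enat" where
  "partial N B ts k = foldl (combine N) init_tbl (map (dp N B) (take k ts))"

text \<open>N_r for the root (m_r is the identity since b_r = \<infinity>).\<close>
fun root_tbl :: "nat \<Rightarrow> real \<Rightarrow> stree \<Rightarrow> nat \<Rightarrow> nat \<Rightarrow> enat" where
  "root_tbl N B (Switch b ts) = partial N B ts (length ts)"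
| "root_tbl N B (PM c b) = dp N B (PM c b)"

text \<open>The effective (mapped) numbers of working VMs of a node given the pair tg
  requested by its parent (the root is requested (N,N) and uses no mapping).\<close>
definition eff :: "nat \<Rightarrow> real \<Rightarrow> stree \<Rightarrow> nat list \<Rightarrow> nat \<times> nat \<Rightarrow> nat \<times> nat" where
  "eff N B t p x = (if p = [] then x else (mv N B (bw t p) (fst x), mv N B (bw t p) (snd x)))"

text \<open>A backtracking run: tg p is the pair (n0,n1) chosen for node p by its parent
  (tg [] = (N,N)); for a switch p with children u_1..u_d, st p k is the pair at which
  N'_p[.,.,k] is looked up, starting with st p d = eff(tg p); going from k+1 to k a
  minimizing choice (st p k, tg (p@[k])) of the recurrence is taken.\<close>
definition bt_run :: "nat \<Rightarrow> real \<Rightarrow> stree \<Rightarrow> (nat list \<Rightarrow> nat \<times> nat) \<Rightarrow>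
    (nat list \<Rightarrow> nat \<Rightarrow> nat \<times> nat) \<Rightarrow> bool" where
  "bt_run N B t tg st \<longleftrightarrow> tg [] = (N, N) \<and>
     (\<forall>p \<in> nodes t. \<forall>b ts. subtree t p = Switch b ts \<longrightarrow>
        st p (length ts) = eff N B t p (tg p) \<and>
        (\<forall>k < length ts.
           fst (st p k) \<le> N \<and> snd (st p k) \<le> N \<and>
           fst (tg (p @ [k])) \<le> N \<and> snd (tg (p @ [k])) \<le> N \<and>
           fst (st p (Suc k)) \<le> fst (st p k) + fst (tg (p @ [k])) \<and>
           snd (st p (Suc k)) \<le> min (fst (st p k) + snd (tg (p @ [k])))
                                    (fst (tg (p @ [k])) + snd (st p k)) \<and>
           partial N B ts k (fst (st p k)) (snd (st p k))
             + dp N B (ts ! k) (fst (tg (p @ [k]))) (snd (tg (p @ [k])))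
           = partial N B ts (Suc k) (fst (st p (Suc k))) (snd (st p (Suc k)))))"

definition hose :: "nat \<Rightarrow> real \<Rightarrow> nat \<times> nat \<Rightarrow> real" where
  "hose N B a = B * max (min (real (fst a)) (real N - real (fst a)))
                        (min (real (snd a)) (real N - real (snd a)))"

text \<open>Possible outputs of Algorithm 1 (None = "Infeasible"); ties in the backtracking
  may be broken arbitrarily.\<close>
definition alg1_output :: "nat \<Rightarrow> real \<Rightarrow> stree \<Rightarrow>
    ((nat list \<Rightarrow> nat) \<times> (nat list \<Rightarrow> real)) option \<Rightarrow> bool" where
  "alg1_output N B t R \<longleftrightarrow>
     (if root_tbl N B t N N = \<infinity> then R = None
      else (\<exists>Cs Bs tg st. R = Some (Cs, Bs) \<and> bt_run N B t tg st \<and>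
              (\<forall>h \<in> pms t. enat (Cs h) = dp N B (subtree t h) (fst (tg h)) (snd (tg h))) \<and>
              (\<forall>v \<in> nodes t - {[]}. Bs v = hose N B (eff N B t v (tg v)))))"

end

theory Submission
  imports Defs
begin

fun good :: "stree \<Rightarrow> bool" where
  "good (PM c b) = (0 \<le> b)"
| "good (Switch b ts) = (0 \<le> b \<and> ts \<noteq> [] \<and> (\<forall>u\<in>set ts. good u))"

lemma valid_Switch_Cons[simp]: "valid (Switch b ts) (i # p) = (i < length ts \<and> valid (ts ! i) p)" by simp

lemma nodes_PM: "nodes (PM c b) = {[]}"
  unfolding nodes_def by (auto elim: valid.elims)

lemma nodes_Switch: "nodes (Switch b ts) = insert [] (\<Union>i<length ts. (#) i ` nodes (ts ! i))"
  unfolding nodes_def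
  apply (rule set_eqI) subgoal for p by (cases p) auto done

lemma pms_PM: "pms (PM c b) = {[]}"
  unfolding pms_def by (auto elim: valid.elims)

lemma pms_Switch: "pms (Switch b ts) = (\<Union>i<length ts. (#) i ` pms (ts ! i))"
  unfolding pms_def
  apply (rule set_eqI) subgoal for p by (cases p) auto done

lemma finite_nodes: "finite (nodes u)"
proof (induction u)
  case (PM c b) then show ?case by (simp add: nodes_PM)
next
  case (Switch b ts) then show ?case by (auto simp: nodes_Switch)
qed

lemma pms_sub_nodes: "pms u \<subseteq> nodes u"
  unfolding pms_def nodes_def by auto

lemma finite_pms: "finite (pms u)"
  using finite_nodes pms_sub_nodes finite_subset by blast

lemma pms_nonempty: "good u \<Longrightarrow> pms u \<noteq> {}"
proof (induction u)
  case (PM c b) then show ?case by (simp add: pms_PM)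
next
  case (Switch b ts)
  then obtain u where "u \<in> set ts" by (cases ts) auto
  then obtain i where "i < length ts" "ts ! i = u" by (auto simp: in_set_conv_nth)
  with Switch show ?case by (auto simp: pms_Switch)
qed

lemma sum_pms_Switch:
  "(\<Sum>h\<in>pms (Switch b ts). f h) = (\<Sum>i<length ts. \<Sum>h\<in>pms (ts ! i). f (i # h))"
  unfolding pms_Switch
  apply (subst sum.UNION_disjoint)
     apply (auto simp: finite_pms)
  apply (subst sum.reindex) apply (auto intro: inj_onI)
  done

lemma subtree_Cons[simp]: "subtree (Switch b ts) (i # p) = subtree (ts ! i) p" by simp

lemma bw_Switch_Cons[simp]: "bw (Switch b ts) (i # p) = bw (ts ! i) p" by (simp add: bw_def)
lemma cap_Switch_Cons[simp]: "cap (Switch b ts) (i # p) = cap (ts ! i) p" by (simp add: cap_def)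
lemma bw_Nil[simp]: "bw u [] = bw_of u" by (simp add: bw_def)
lemma cap_PM_Nil[simp]: "cap (PM c b) [] = c" by (simp add: cap_def)

lemma valid_append: "valid u (p @ q) = (valid u p \<and> valid (subtree u p) q)"
proof (induction u p rule: valid.induct)
  case (2 c b i p) then show ?case by (cases q) auto
qed auto

lemma subtree_append: "valid u p \<Longrightarrow> subtree u (p @ q) = subtree (subtree u p) q"
  by (induction u p rule: valid.induct) auto

lemma good_subtree: "good u \<Longrightarrow> valid u p \<Longrightarrow> good (subtree u p)"
  by (induction u p rule: valid.induct) auto

lemma pm_ext: "valid u p \<Longrightarrow> is_pm (subtree u p) \<Longrightarrow> valid u (p @ q) \<Longrightarrow> q = []"
  apply (cases q) apply simp
  apply (simp add: valid_append) apply (cases "subtree u p") apply auto done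


definition lk :: "nat \<Rightarrow> real \<Rightarrow> real \<Rightarrow> nat \<Rightarrow> bool" where
  "lk N B b x \<longleftrightarrow> min (real x) (real N - real x) * B \<le> b"

definition cnt :: "stree \<Rightarrow> (nat list \<Rightarrow> nat) \<Rightarrow> nat" where
  "cnt u C = (\<Sum>h\<in>pms u. C h)"

lemma cnt_PM[simp]: "cnt (PM c b) C = C []" by (simp add: cnt_def pms_PM)
lemma cnt_Switch: "cnt (Switch b ts) C = (\<Sum>i<length ts. cnt (ts ! i) (C \<circ> (#) i))"
  by (simp add: cnt_def sum_pms_Switch)

function ok :: "nat \<Rightarrow> real \<Rightarrow> stree \<Rightarrow> (nat list \<Rightarrow> real) \<Rightarrow> (nat list \<Rightarrow> nat) \<Rightarrow> bool" where
  "ok N B (PM c b) bwf C = lk N B (bwf []) (C [])"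
| "ok N B (Switch b ts) bwf C = (lk N B (bwf []) (cnt (Switch b ts) C) \<and>
      (\<forall>i<length ts. ok N B (ts ! i) (bwf \<circ> (#) i) (C \<circ> (#) i)))"
  by pat_completeness auto
termination
  apply (relation "measure (\<lambda>(_,_,u,_,_). size u)")
   apply auto
  by (metis le_imp_less_Suc nth_mem order_refl size_list_estimation')

lemma sub_set_Cons:
  "i < length ts \<Longrightarrow> {h \<in> pms (Switch b ts). \<exists>q. h = (i # v) @ q} = (#) i ` {h \<in> pms (ts ! i). \<exists>q. h = v @ q}"
  by (auto simp: pms_Switch)

lemma ok_iff:
  "ok N B u bwf C \<longleftrightarrow> (\<forall>v\<in>nodes u. lk N B (bwf v) (\<Sum>h\<in>{h\<in>pms u. \<exists>q. h = v @ q}. C h))"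
proof (induction u arbitrary: bwf C)
  case (PM c b)
  then show ?case by (simp add: nodes_PM pms_PM)
next
  case (Switch b ts)
  have A: "(\<Sum>h\<in>{h\<in>pms (Switch b ts). \<exists>q. h = [] @ q}. C h) = cnt (Switch b ts) C"
    by (simp add: cnt_def)
  have B: "(\<Sum>h\<in>{h\<in>pms (Switch b ts). \<exists>q. h = (i # v) @ q}. C h)
        = (\<Sum>h\<in>{h\<in>pms (ts ! i). \<exists>q. h = v @ q}. (C \<circ> (#) i) h)" if "i < length ts" for i v
    unfolding sub_set_Cons[OF that] by (subst sum.reindex) (auto intro: inj_onI)
  have "ok N B (Switch b ts) bwf C \<longleftrightarrow> lk N B (bwf []) (cnt (Switch b ts) C) \<and>
      (\<forall>i<length ts. \<forall>v\<in>nodes (ts ! i). lk N B (bwf (i # v))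
          (\<Sum>h\<in>{h\<in>pms (ts ! i). \<exists>q. h = v @ q}. (C \<circ> (#) i) h))"
    using Switch.IH by (auto simp: nth_mem)
  also have "\<dots> \<longleftrightarrow> (\<forall>v\<in>nodes (Switch b ts). lk N B (bwf v) (\<Sum>h\<in>{h\<in>pms (Switch b ts). \<exists>q. h = v @ q}. C h))"
    unfolding nodes_Switch using A B by auto
  finally show ?case .
qed

lemma lk_zero: "0 \<le> b \<Longrightarrow> 0 < B \<Longrightarrow> lk N B b 0" by (simp add: lk_def)

lemma lk_mono: "lk N B b x \<Longrightarrow> b \<le> b' \<Longrightarrow> lk N B b' x" by (simp add: lk_def)

lemma ok_mono_bw: "ok N B u bwf C \<Longrightarrow> (\<forall>v\<in>nodes u. bwf v \<le> bwf' v) \<Longrightarrow> ok N B u bwf' C"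
  by (auto simp: ok_iff intro: lk_mono)


lemma partial_0[simp]: "partial N B ts 0 = init_tbl" by (simp add: partial_def)

lemma partial_Suc: "k < length ts \<Longrightarrow>
   partial N B ts (Suc k) = combine N (partial N B ts k) (dp N B (ts ! k))"
  by (simp add: partial_def take_Suc_conv_app_nth)

lemma dp_Switch: "dp N B (Switch b ts) n0 n1 = partial N B ts (length ts) (mv N B b n0) (mv N B b n1)"
  by (simp add: partial_def)

definition cset :: "nat \<Rightarrow> nat \<Rightarrow> nat \<Rightarrow> (nat \<times> nat \<times> nat \<times> nat) set" where
  "cset N n0 n1 = {(a0, a1, b0, b1). a0 \<le> N \<and> a1 \<le> N \<and> b0 \<le> N \<and> b1 \<le> N \<and>
                  n0 \<le> a0 + b0 \<and> n1 \<le> min (a0 + b1) (b0 + a1)}"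

lemma combine_cset: "combine N P Q n0 n1 = (INF x \<in> cset N n0 n1. (case x of (a0, a1, b0, b1) \<Rightarrow> P a0 a1 + Q b0 b1))"
  by (simp add: combine_def cset_def)

lemma combine_le:
  assumes "a0 \<le> N" "a1 \<le> N" "b0 \<le> N" "b1 \<le> N" "n0 \<le> a0 + b0" "n1 \<le> min (a0 + b1) (b0 + a1)"
  shows "combine N P Q n0 n1 \<le> P a0 a1 + Q b0 b1"
  unfolding combine_cset
  by (rule INF_lower2[of "(a0,a1,b0,b1)"]) (use assms in \<open>auto simp: cset_def\<close>)

lemma combine_anti:
  assumes "n0 \<le> n0'" "n1 \<le> n1'"
  shows "combine N P Q n0 n1 \<le> combine N P Q n0' n1'"
  unfolding combine_cset
  apply (rule INF_superset_mono)
  using assms by (auto simp: cset_def)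

lemma finite_cset: "finite (cset N n0 n1)"
  by (rule finite_subset[of _ "{..N} \<times> {..N} \<times> {..N} \<times> {..N}"]) (auto simp: cset_def)

lemma cset_ne: "n0 \<le> N \<Longrightarrow> n1 \<le> N \<Longrightarrow> cset N n0 n1 \<noteq> {}"
  unfolding cset_def by (rule ex_in_conv[THEN iffD1], rule exI[of _ "(N,N,N,N)"]) auto

lemma combine_attained:
  assumes "n0 \<le> N" "n1 \<le> N"
  shows "\<exists>a0 a1 b0 b1. a0 \<le> N \<and> a1 \<le> N \<and> b0 \<le> N \<and> b1 \<le> N \<and> n0 \<le> a0 + b0 \<and>
           n1 \<le> min (a0 + b1) (b0 + a1) \<and> combine N P Q n0 n1 = P a0 a1 + Q b0 b1"
proof -
  let ?f = "\<lambda>x. (case x of (a0, a1, b0, b1) \<Rightarrow> P a0 a1 + Q b0 b1)"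
  have "?f ` cset N n0 n1 \<noteq> {}" "finite (?f ` cset N n0 n1)"
    using cset_ne[OF assms] finite_cset by auto
  then have "Inf (?f ` cset N n0 n1) \<in> ?f ` cset N n0 n1"
    by (simp add: cInf_eq_Min)
  then obtain x where "x \<in> cset N n0 n1" "combine N P Q n0 n1 = ?f x"
    unfolding combine_cset by auto
  then show ?thesis by (cases x) (auto simp: cset_def)
qed

lemma partial_anti:
  "0 < k \<Longrightarrow> k \<le> length ts \<Longrightarrow> n0 \<le> n0' \<Longrightarrow> n1 \<le> n1' \<Longrightarrow>
   partial N B ts k n0 n1 \<le> partial N B ts k n0' n1'"
  by (cases k) (auto simp: partial_Suc intro: combine_anti)

context fixes N :: nat and B :: real and b :: real
  assumes Bpos: "0 < B" and bnn: "0 \<le> b"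
begin

lemma mv_ge: "x \<le> mv N B b x"
proof (cases "inLam N B b x")
  case False
  then have "real x < real N - b / B" by (simp add: inLam_def)
  then have "int x < \<lceil>real N - b / B\<rceil>" by (simp add: less_ceiling_iff)
  then have "x \<le> nat \<lceil>real N - b / B\<rceil>" by linarith
  then show ?thesis using False by (simp add: mv_def lam_def)
qed (simp add: mv_def)

lemma lam_le: "lam N B b \<le> N"
proof -
  have h: "b / B \<ge> 0" using Bpos bnn by (simp add: divide_nonneg_pos)
  then have "\<lceil>real N - b / B\<rceil> \<le> int N" by (simp add: ceiling_le_iff)
  then show ?thesis using h unfolding lam_def by linarith
qed

lemma inLam_lam: "inLam N B b (lam N B b)"
proof -
  have "real N - b / B \<le> of_int \<lceil>real N - b / B\<rceil>" by (rule le_of_int_ceiling)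
  also have "\<dots> \<le> real (nat \<lceil>real N - b / B\<rceil>)" by simp
  finally show ?thesis unfolding inLam_def lam_def by simp
qed

lemma mv_le: "x \<le> N \<Longrightarrow> mv N B b x \<le> N"
  using lam_le by (simp add: mv_def)

lemma inLam_mv: "inLam N B b (mv N B b x)"
  using inLam_lam by (simp add: mv_def)

lemma mv_id: "inLam N B b x \<Longrightarrow> mv N B b x = x" by (simp add: mv_def)

lemma inLam_lk: "inLam N B b e \<Longrightarrow> lk N B b e"
proof -
  assume "inLam N B b e"
  then have "real e * B \<le> b \<or> (real N - real e) * B \<le> b"
    using Bpos by (auto simp: inLam_def field_simps)
  moreover have "min (real e) (real N - real e) * B \<le> real e * B"
    "min (real e) (real N - real e) * B \<le> (real N - real e) * B"
    using Bpos by (auto intro: mult_right_mono)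
  ultimately show ?thesis unfolding lk_def by linarith
qed

lemma lk_inLam: "lk N B b x \<Longrightarrow> inLam N B b (min N x)"
proof -
  assume a: "lk N B b x"
  show ?thesis
  proof (cases "x \<le> N")
    case True
    have "real x * B \<le> b \<or> (real N - real x) * B \<le> b"
      using a by (auto simp: lk_def min_def split: if_splits)
    then show ?thesis using True Bpos by (auto simp: inLam_def field_simps min_def)
  next
    case False
    have "0 \<le> b / B" using Bpos bnn by (simp add: divide_nonneg_pos)
    then show ?thesis using False by (auto simp: inLam_def min_def)
  qed
qed

lemma leaf_fin:
  assumes "leaf_tbl N B c b n0 n1 \<noteq> \<infinity>"
  shows "n1 = 0 \<and> leaf_tbl N B c b n0 n1 = enat (mv N B b n0) \<and> mv N B b n0 \<le> c"
  using assms by (auto simp: leaf_tbl_def mv_def split: if_splits)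

end


lemma good_bw: "good u \<Longrightarrow> v \<in> nodes u \<Longrightarrow> 0 \<le> bw u v"
proof -
  assume "good u" "v \<in> nodes u"
  then have "good (subtree u v)" using good_subtree by (auto simp: nodes_def)
  then show ?thesis by (cases "subtree u v") (auto simp: bw_def)
qed

lemma ok_lk_root: "ok N B u bwf C \<Longrightarrow> lk N B (bwf []) (cnt u C)"
  by (cases u) auto

definition AS :: "nat \<Rightarrow> real \<Rightarrow> stree \<Rightarrow> (nat list \<Rightarrow> nat) \<Rightarrow> nat set" where
  "AS N B u \<kappa> = {cnt u C | C. (\<forall>h\<in>pms u. C h \<le> \<kappa> h) \<and> ok N B u (bw u) C}"

definition Amax :: "nat \<Rightarrow> real \<Rightarrow> stree \<Rightarrow> (nat list \<Rightarrow> nat) \<Rightarrow> nat" where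
  "Amax N B u \<kappa> = Max (AS N B u \<kappa>)"

definition fF :: "nat \<Rightarrow> real \<Rightarrow> stree \<Rightarrow> (nat list \<Rightarrow> nat) \<Rightarrow> nat" where
  "fF N B u \<kappa> = Min ((\<lambda>F. Amax N B u (\<kappa>(F := 0))) ` pms u)"

lemma AS_finite: "finite (AS N B u \<kappa>)"
proof -
  have "AS N B u \<kappa> \<subseteq> {..(\<Sum>h\<in>pms u. \<kappa> h)}"
    by (auto simp: AS_def cnt_def intro!: sum_mono)
  then show ?thesis using finite_subset by blast
qed

lemma AS_zero: "good u \<Longrightarrow> 0 < B \<Longrightarrow> 0 \<in> AS N B u \<kappa>"
  unfolding AS_def
  apply (rule CollectI, rule exI[of _ "\<lambda>_. 0"])
  by (auto simp: cnt_def ok_iff intro!: lk_zero good_bw)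

lemma AS_le: "x \<in> AS N B u \<kappa> \<Longrightarrow> x \<le> Amax N B u \<kappa>"
  by (simp add: Amax_def AS_finite)

lemma Amax_in: "good u \<Longrightarrow> 0 < B \<Longrightarrow> Amax N B u \<kappa> \<in> AS N B u \<kappa>"
  unfolding Amax_def using AS_zero AS_finite by (metis Max_in empty_iff)

lemma AS_lk: "x \<in> AS N B u \<kappa> \<Longrightarrow> lk N B (bw_of u) x"
  by (auto simp: AS_def dest: ok_lk_root)

lemma AS_mono: "(\<forall>h\<in>pms u. \<kappa> h \<le> \<kappa>' h) \<Longrightarrow> AS N B u \<kappa> \<subseteq> AS N B u \<kappa>'"
  unfolding AS_def by (auto intro: order_trans)

lemma Amax_mono: "good u \<Longrightarrow> 0 < B \<Longrightarrow> (\<forall>h\<in>pms u. \<kappa> h \<le> \<kappa>' h) \<Longrightarrow> Amax N B u \<kappa> \<le> Amax N B u \<kappa>'"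
  using Amax_in AS_mono AS_le by blast

lemma fF_le_Amax: "good u \<Longrightarrow> 0 < B \<Longrightarrow> fF N B u \<kappa> \<le> Amax N B u \<kappa>"
proof -
  assume g: "good u" "0 < B"
  obtain F where F: "F \<in> pms u" using pms_nonempty[OF g(1)] by blast
  have "fF N B u \<kappa> \<le> Amax N B u (\<kappa>(F := 0))"
    unfolding fF_def using F finite_pms by (auto intro: Min_le)
  also have "\<dots> \<le> Amax N B u \<kappa>" by (rule Amax_mono[OF g]) auto
  finally show ?thesis .
qed

lemma fF_attained: "good u \<Longrightarrow> \<exists>F\<in>pms u. fF N B u \<kappa> = Amax N B u (\<kappa>(F := 0))"
proof -
  assume g: "good u"
  have "fF N B u \<kappa> \<in> (\<lambda>F. Amax N B u (\<kappa>(F := 0))) ` pms u"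
    unfolding fF_def using pms_nonempty[OF g] finite_pms by (intro Min_in) auto
  then show ?thesis by auto
qed

lemma fF_le: "F \<in> pms u \<Longrightarrow> fF N B u \<kappa> \<le> Amax N B u (\<kappa>(F := 0))"
  unfolding fF_def using finite_pms by (auto intro: Min_le)

lemma ok_child:
  assumes "ok N B (Switch b ts) bwf C" "i < length ts"
  shows "ok N B (ts ! i) (bwf \<circ> (#) i) (C \<circ> (#) i)"
  using assms by simp

lemma bw_comp: "bw (Switch b ts) \<circ> (#) i = bw (ts ! i)"
  by (rule ext) simp

lemma AS_Switch_dec:
  assumes "x \<in> AS N B (Switch b ts) \<kappa>"
  shows "lk N B b x \<and> (\<exists>xs. x = (\<Sum>i<length ts. xs i) \<and>
            (\<forall>i<length ts. xs i \<in> AS N B (ts ! i) (\<kappa> \<circ> (#) i)))"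
proof -
  obtain C where C: "x = cnt (Switch b ts) C" "\<forall>h\<in>pms (Switch b ts). C h \<le> \<kappa> h"
    "ok N B (Switch b ts) (bw (Switch b ts)) C"
    using assms unfolding AS_def by blast
  have "lk N B b x" using C(1,3) by (auto dest: ok_lk_root)
  moreover have "\<forall>i<length ts. cnt (ts ! i) (C \<circ> (#) i) \<in> AS N B (ts ! i) (\<kappa> \<circ> (#) i)"
  proof (intro allI impI)
    fix i assume i: "i < length ts"
    have "ok N B (ts ! i) (bw (ts ! i)) (C \<circ> (#) i)"
      using ok_child[OF C(3) i] by (simp add: bw_comp)
    moreover have "\<forall>h\<in>pms (ts ! i). (C \<circ> (#) i) h \<le> (\<kappa> \<circ> (#) i) h"
      using C(2) i by (auto simp: pms_Switch)
    ultimately show "cnt (ts ! i) (C \<circ> (#) i) \<in> AS N B (ts ! i) (\<kappa> \<circ> (#) i)"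
      unfolding AS_def by blast
  qed
  ultimately show ?thesis using C(1) by (auto simp: cnt_Switch)
qed

lemma upd_comp: "(\<kappa>((j # h) := 0)) \<circ> (#) i = (if i = j then (\<kappa> \<circ> (#) i)(h := 0) else \<kappa> \<circ> (#) i)"
  by (rule ext) auto

lemma sum_swap_one:
  fixes g :: "nat \<Rightarrow> nat"
  assumes "j < d"
  shows "(\<Sum>i<d. (g(j := y)) i) + g j = (\<Sum>i<d. g i) + y"
proof -
  have "(\<Sum>i<d. (g(j := y)) i) = y + (\<Sum>i\<in>{..<d} - {j}. g i)"
    using assms by (simp add: sum.remove[of "{..<d}" j])
  moreover have "(\<Sum>i<d. g i) = g j + (\<Sum>i\<in>{..<d} - {j}. g i)"
    using assms by (simp add: sum.remove[of "{..<d}" j])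
  ultimately show ?thesis by simp
qed

fun P1seq :: "(nat \<Rightarrow> nat) \<Rightarrow> (nat \<Rightarrow> nat) \<Rightarrow> nat \<Rightarrow> nat" where
  "P1seq A f 0 = 0"
| "P1seq A f (Suc k) = min (P1seq A f k + A k) ((\<Sum>i<k. A i) + f k)"

lemma P1seq_char:
  "0 < k \<Longrightarrow> (\<forall>i<k. f i \<le> A i) \<Longrightarrow> \<exists>j<k. P1seq A f k + A j = (\<Sum>i<k. A i) + f j"
proof (induction k)
  case 0 then show ?case by simp
next
  case (Suc k)
  show ?case
  proof (cases "k = 0")
    case True
    then show ?thesis using Suc.prems by (auto intro: exI[of _ 0])
  next
    case False
    then obtain j where j: "j < k" "P1seq A f k + A j = (\<Sum>i<k. A i) + f j"
      using Suc by auto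
    show ?thesis
    proof (cases "P1seq A f k + A k \<le> (\<Sum>i<k. A i) + f k")
      case True
      then show ?thesis using j by (intro exI[of _ j]) auto
    next
      case False
      then show ?thesis by (intro exI[of _ k]) auto
    qed
  qed
qed

lemma minN_add: "(x::nat) \<le> y + z \<Longrightarrow> min N x \<le> min N y + min N z"
  by auto

lemma prefix_bound:
  assumes "k \<le> length ts"
    and "\<forall>i<k. dp N B (ts ! i) (min N (A i)) (min N (f i)) \<le> enat (c i)"
    and "\<forall>i<k. f i \<le> A i"
  shows "partial N B ts k (min N (\<Sum>i<k. A i)) (min N (P1seq A f k)) \<le> enat (\<Sum>i<k. c i)"
  using assms
proof (induction k)
  case 0 then show ?case by (simp add: init_tbl_def zero_enat_def)
next
  case (Suc k)
  have k: "k < length ts" using Suc.prems by simp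
  have IH: "partial N B ts k (min N (\<Sum>i<k. A i)) (min N (P1seq A f k)) \<le> enat (\<Sum>i<k. c i)"
    using Suc by auto
  have "partial N B ts (Suc k) (min N (\<Sum>i<Suc k. A i)) (min N (P1seq A f (Suc k)))
        \<le> partial N B ts k (min N (\<Sum>i<k. A i)) (min N (P1seq A f k))
           + dp N B (ts ! k) (min N (A k)) (min N (f k))"
    unfolding partial_Suc[OF k]
    by (rule combine_le) (auto simp: min_def)
  also have "\<dots> \<le> enat (\<Sum>i<k. c i) + enat (c k)"
    using IH Suc.prems by (intro add_mono) auto
  finally show ?case by simp
qed


lemma AS_PM_le: "x \<in> AS N B (PM c b) \<kappa> \<Longrightarrow> x \<le> \<kappa> []"
  by (auto simp: AS_def pms_PM)

lemma LB:
  assumes "good u" "0 < B" "\<forall>h\<in>pms u. \<kappa> h \<le> cap u h"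
  shows "dp N B u (min N (Amax N B u \<kappa>)) (min N (fF N B u \<kappa>)) \<le> enat (\<Sum>h\<in>pms u. \<kappa> h)"
  using assms
proof (induction u arbitrary: \<kappa>)
  case (PM c b)
  let ?A = "Amax N B (PM c b) \<kappa>"
  have inA: "?A \<in> AS N B (PM c b) \<kappa>" using Amax_in PM.prems by blast
  have "fF N B (PM c b) \<kappa> \<le> Amax N B (PM c b) (\<kappa>([] := 0))"
    by (rule fF_le) (simp add: pms_PM)
  also have "\<dots> \<le> 0"
    using AS_PM_le[OF Amax_in[OF PM.prems(1,2)], of N "\<kappa>([] := 0)"] by simp
  finally have f0: "fF N B (PM c b) \<kappa> = 0" by simp
  have le: "?A \<le> \<kappa> []" using AS_PM_le[OF inA] .
  have "lk N B b ?A" using AS_lk[OF inA] by simp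
  then have il: "inLam N B b (min N ?A)" using lk_inLam PM.prems by auto
  have "\<kappa> [] \<le> c" using PM.prems(3) by (simp add: pms_PM cap_def)
  then have m: "min N ?A \<le> c" "min N ?A \<le> \<kappa> []" using le by auto
  have "leaf_tbl N B c b (min N ?A) 0 = enat (min N ?A)"
    using m il unfolding leaf_tbl_def by presburger
  then show ?case using m by (simp add: f0 pms_PM)
next
  case (Switch b ts)
  let ?d = "length ts"
  let ?k = "\<lambda>i. \<kappa> \<circ> (#) i"
  define A where "A i = Amax N B (ts ! i) (?k i)" for i
  define f where "f i = fF N B (ts ! i) (?k i)" for i
  have gs: "\<forall>i<?d. good (ts ! i)" "0 \<le> b" "ts \<noteq> []" using Switch.prems(1) by (auto simp: nth_mem)
  have capi: "\<forall>h\<in>pms (ts ! i). ?k i h \<le> cap (ts ! i) h" if "i < ?d" for i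
    using Switch.prems(3) that by (auto simp: pms_Switch)
  have IH: "\<forall>i<?d. dp N B (ts ! i) (min N (A i)) (min N (f i)) \<le> enat (\<Sum>h\<in>pms (ts ! i). ?k i h)"
  proof (intro allI impI)
    fix i assume i: "i < ?d"
    have "dp N B (ts ! i) (min N (Amax N B (ts ! i) (?k i))) (min N (fF N B (ts ! i) (?k i)))
          \<le> enat (sum (?k i) (pms (ts ! i)))"
      using Switch.IH[OF nth_mem[OF i] _ Switch.prems(2)] gs(1) capi[OF i] i by blast
    then show "dp N B (ts ! i) (min N (A i)) (min N (f i)) \<le> enat (\<Sum>h\<in>pms (ts ! i). ?k i h)"
      unfolding A_def f_def by simp
  qed
  have fA: "\<forall>i<?d. f i \<le> A i" using fF_le_Amax gs Switch.prems(2) unfolding A_def f_def by auto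
  have pb: "partial N B ts ?d (min N (\<Sum>i<?d. A i)) (min N (P1seq A f ?d))
     \<le> enat (\<Sum>i<?d. \<Sum>h\<in>pms (ts ! i). ?k i h)"
    by (rule prefix_bound) (use IH fA in auto)
  let ?Av = "Amax N B (Switch b ts) \<kappa>"
  let ?fv = "fF N B (Switch b ts) \<kappa>"
  have inAv: "?Av \<in> AS N B (Switch b ts) \<kappa>" using Amax_in Switch.prems by blast
  have Av_le: "?Av \<le> (\<Sum>i<?d. A i)"
  proof -
    obtain xs where "?Av = (\<Sum>i<?d. xs i)" "\<forall>i<?d. xs i \<in> AS N B (ts ! i) (?k i)"
      using AS_Switch_dec[OF inAv] by blast
    then show ?thesis unfolding A_def by (auto intro!: sum_mono AS_le)
  qed
  obtain j where j: "j < ?d" "P1seq A f ?d + A j = (\<Sum>i<?d. A i) + f j"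
    using P1seq_char[of ?d f A] fA gs(3) by auto
  obtain h where h: "h \<in> pms (ts ! j)" "f j = Amax N B (ts ! j) ((?k j)(h := 0))"
    using fF_attained gs j unfolding f_def by blast
  have fv_le: "?fv \<le> P1seq A f ?d"
  proof -
    have F: "j # h \<in> pms (Switch b ts)" using h j by (auto simp: pms_Switch)
    have "?fv \<le> Amax N B (Switch b ts) (\<kappa>((j # h) := 0))" by (rule fF_le[OF F])
    moreover
    have inF: "Amax N B (Switch b ts) (\<kappa>((j # h) := 0)) \<in> AS N B (Switch b ts) (\<kappa>((j # h) := 0))"
      using Amax_in Switch.prems by blast
    obtain xs where xs: "Amax N B (Switch b ts) (\<kappa>((j # h) := 0)) = (\<Sum>i<?d. xs i)"
      "\<forall>i<?d. xs i \<in> AS N B (ts ! i) ((\<kappa>((j # h) := 0)) \<circ> (#) i)"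
      using AS_Switch_dec[OF inF] by blast
    have "(\<Sum>i<?d. xs i) \<le> (\<Sum>i<?d. (A(j := f j)) i)"
    proof (rule sum_mono)
      fix i assume i: "i \<in> {..<?d}"
      then have "xs i \<in> AS N B (ts ! i) (if i = j then (?k i)(h := 0) else ?k i)"
        using xs(2) unfolding upd_comp by auto
      then show "xs i \<le> (A(j := f j)) i"
        unfolding A_def h(2)
        by (cases "i = j") (auto intro: AS_le)
    qed
    then have "(\<Sum>i<?d. xs i) + A j \<le> (\<Sum>i<?d. A i) + f j"
      using sum_swap_one[OF j(1), of A "f j"] by simp
    ultimately show ?thesis using xs(1) j(2) by simp
  qed
  have lkA: "lk N B b ?Av" using AS_lk[OF inAv] by simp
  obtain F where "F \<in> pms (Switch b ts)" "?fv = Amax N B (Switch b ts) (\<kappa>(F := 0))"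
    using fF_attained Switch.prems(1) by blast
  then have "lk N B b ?fv" using AS_lk[OF Amax_in[OF Switch.prems(1,2)]] by simp
  then have mvf: "mv N B b (min N ?fv) = min N ?fv" using lk_inLam mv_id gs(2) Switch.prems(2) by blast
  have mvA: "mv N B b (min N ?Av) = min N ?Av" using lkA lk_inLam mv_id gs(2) Switch.prems(2) by blast
  have "dp N B (Switch b ts) (min N ?Av) (min N ?fv) = partial N B ts ?d (min N ?Av) (min N ?fv)"
    unfolding dp_Switch mvf mvA ..
  also have "\<dots> \<le> partial N B ts ?d (min N (\<Sum>i<?d. A i)) (min N (P1seq A f ?d))"
    using gs(3) Av_le fv_le by (intro partial_anti) auto
  also have "\<dots> \<le> enat (\<Sum>h\<in>pms (Switch b ts). \<kappa> h)"
    using pb by (simp add: sum_pms_Switch)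
  finally show ?case .
qed


lemma good_from:
  "(\<forall>p\<in>nodes u. (\<forall>b ts. subtree u p = Switch b ts \<longrightarrow> ts \<noteq> []) \<and> 0 \<le> bw u p) \<Longrightarrow> good u"
proof (induction u)
  case (PM c b)
  then show ?case by (auto simp: nodes_PM)
next
  case (Switch b ts)
  have "good u" if u: "u \<in> set ts" for u
  proof -
    obtain i where i: "i < length ts" "u = ts ! i" using u by (auto simp: in_set_conv_nth)
    have "\<forall>p\<in>nodes u. (\<forall>b ts. subtree u p = Switch b ts \<longrightarrow> ts \<noteq> []) \<and> 0 \<le> bw u p"
    proof
      fix p assume "p \<in> nodes u"
      then have "i # p \<in> nodes (Switch b ts)" using i by (auto simp: nodes_Switch)
      then have "(\<forall>b' ts'. subtree (Switch b ts) (i # p) = Switch b' ts' \<longrightarrow> ts' \<noteq> []) \<and> 0 \<le> bw (Switch b ts) (i # p)"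
        using Switch.prems by blast
      then show "(\<forall>b ts. subtree u p = Switch b ts \<longrightarrow> ts \<noteq> []) \<and> 0 \<le> bw u p"
        using i by simp
    qed
    then show ?thesis using Switch.IH u by blast
  qed
  moreover have "ts \<noteq> []" "0 \<le> b" using Switch.prems by (auto simp: nodes_Switch bw_def)
  ultimately show ?case by auto
qed

lemma wf_root:
  assumes "wf_substrate t"
  obtains b ts where "t = Switch b ts" "ts \<noteq> []" "\<forall>i<length ts. good (ts ! i)"
proof -
  have W: "\<And>p. p \<in> nodes t \<Longrightarrow> (\<forall>b ts. subtree t p = Switch b ts \<longrightarrow> ts \<noteq> []) \<and> (p \<noteq> [] \<longrightarrow> 0 \<le> bw t p)"
    and np: "\<not> is_pm t"
    using assms unfolding wf_substrate_def by auto
  obtain b ts where t: "t = Switch b ts" using np by (cases t) auto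
  have "[] \<in> nodes t" by (simp add: nodes_def)
  from W[OF this] have ne: "ts \<noteq> []" using t by simp
  have "good (ts ! i)" if i: "i < length ts" for i
  proof (rule good_from, rule ballI)
    fix p assume "p \<in> nodes (ts ! i)"
    then have "i # p \<in> nodes t" using i t by (auto simp: nodes_Switch)
    from W[OF this] show "(\<forall>b ts'. subtree (ts ! i) p = Switch b ts' \<longrightarrow> ts' \<noteq> []) \<and> 0 \<le> bw (ts ! i) p"
      using t by simp
  qed
  then show ?thesis using that[OF t ne] by blast
qed

lemma wf_bw: "wf_substrate t \<Longrightarrow> v \<in> nodes t \<Longrightarrow> v \<noteq> [] \<Longrightarrow> 0 \<le> bw t v"
  by (auto simp: wf_substrate_def)

lemma pm_singleton:
  assumes "F \<in> pms t"
  shows "{h \<in> pms t. \<exists>q. h = F @ q} = {F}"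
proof -
  have "h = F" if "h \<in> pms t" "h = F @ q" for h q
    using pm_ext[of t F q] assms that by (auto simp: pms_def)
  then show ?thesis using assms by auto
qed

lemma vce_to_ok:
  assumes wf: "wf_substrate t" and B: "0 < B" and F: "F \<in> pms t"
    and v: "vce N B (pms t - {F}) (nodes t - {[], F}) Cs Bs C"
    and Bsle: "\<forall>v\<in>nodes t - {[]}. Bs v \<le> bw t v"
  shows "ok N B t ((bw t)([] := real N * B)) (C(F := 0))
       \<and> (\<forall>h\<in>pms t. (C(F := 0)) h \<le> (Cs(F := 0)) h)
       \<and> cnt t (C(F := 0)) = N"
proof -
  let ?C = "C(F := 0)"
  have sumeq: "(\<Sum>h\<in>S. ?C h) = (\<Sum>h\<in>S - {F}. C h)" if "finite S" for S
  proof -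
    have "(\<Sum>h\<in>S. ?C h) = (\<Sum>h\<in>S - {F}. ?C h)"
      using that by (cases "F \<in> S") (auto simp: sum.remove)
    also have "\<dots> = (\<Sum>h\<in>S - {F}. C h)" by (rule sum.cong) auto
    finally show ?thesis .
  qed
  have fin: "finite {h \<in> pms t. \<exists>q. h = v @ q}" for v using finite_pms by auto
  have vv: "\<forall>h \<in> pms t - {F}. C h \<le> Cs h" "(\<Sum>h\<in>pms t - {F}. C h) = N"
    "\<forall>v \<in> nodes t - {[], F}. lk N B (Bs v) (\<Sum>h\<in>{h\<in>pms t - {F}. \<exists>q. h = v @ q}. C h)"
    using v unfolding vce_def lk_def Let_def by auto
  have "ok N B t ((bw t)([] := real N * B)) ?C"
    unfolding ok_iff
  proof
    fix w assume w: "w \<in> nodes t"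
    let ?s = "\<Sum>h\<in>{h\<in>pms t. \<exists>q. h = w @ q}. ?C h"
    show "lk N B (((bw t)([] := real N * B)) w) ?s"
    proof (cases "w = []")
      case True
      have "min (real ?s) (real N - real ?s) \<le> real N" by auto
      then have "min (real ?s) (real N - real ?s) * B \<le> real N * B" using B by (intro mult_right_mono) auto
      then show ?thesis using True by (simp add: lk_def)
    next
      case False
      show ?thesis
      proof (cases "w = F")
        case True
        then have "?s = 0" using pm_singleton[OF F] by simp
        then show ?thesis using False True lk_zero wf_bw[OF wf w False] B by simp
      next
        case wF: False
        have "{h\<in>pms t. \<exists>q. h = w @ q} - {F} = {h\<in>pms t - {F}. \<exists>q. h = w @ q}" by auto
        then have "?s = (\<Sum>h\<in>{h\<in>pms t - {F}. \<exists>q. h = w @ q}. C h)" using sumeq[OF fin] by simp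
        then have "lk N B (Bs w) ?s" using vv(3) w False wF by auto
        then show ?thesis using lk_mono Bsle w False by simp
      qed
    qed
  qed
  moreover have "\<forall>h\<in>pms t. ?C h \<le> (Cs(F := 0)) h" using vv(1) by auto
  moreover have "cnt t ?C = N" unfolding cnt_def using sumeq[OF finite_pms] vv(2) by simp
  ultimately show ?thesis by blast
qed

lemma alloc_AS:
  assumes "ok N B (Switch b ts) ((bw (Switch b ts))([] := X)) C"
    "\<forall>h\<in>pms (Switch b ts). C h \<le> \<kappa> h" "i < length ts"
  shows "cnt (ts ! i) (C \<circ> (#) i) \<in> AS N B (ts ! i) (\<kappa> \<circ> (#) i)"
proof -
  have e: "(bw (Switch b ts))([] := X) \<circ> (#) i = bw (ts ! i)" by (rule ext) simp
  have "ok N B (ts ! i) (bw (ts ! i)) (C \<circ> (#) i)" using ok_child[OF assms(1,3)] e by simp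
  moreover have "\<forall>h\<in>pms (ts ! i). (C \<circ> (#) i) h \<le> (\<kappa> \<circ> (#) i) h"
    using assms(2,3) by (auto simp: pms_Switch)
  ultimately show ?thesis unfolding AS_def by blast
qed

theorem root_LB:
  assumes wf: "wf_substrate t" and B: "0 < B" and sv: "is_svce N B t Cs Bs"
  shows "root_tbl N B t N N \<le> enat (\<Sum>h\<in>pms t. Cs h)"
proof -
  obtain b ts where t: "t = Switch b ts" "ts \<noteq> []" and gs: "\<forall>i<length ts. good (ts ! i)"
    using wf_root[OF wf] by blast
  let ?d = "length ts"
  let ?k = "\<lambda>i. Cs \<circ> (#) i"
  define A where "A i = Amax N B (ts ! i) (?k i)" for i
  define f where "f i = fF N B (ts ! i) (?k i)" for i
  have capi: "\<forall>h\<in>pms (ts ! i). ?k i h \<le> cap (ts ! i) h" if "i < ?d" for i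
    using sv that t by (auto simp: pms_Switch is_svce_def)
  have IH: "\<forall>i<?d. dp N B (ts ! i) (min N (A i)) (min N (f i)) \<le> enat (\<Sum>h\<in>pms (ts ! i). ?k i h)"
  proof (intro allI impI)
    fix i assume i: "i < ?d"
    have "dp N B (ts ! i) (min N (Amax N B (ts ! i) (?k i))) (min N (fF N B (ts ! i) (?k i)))
          \<le> enat (sum (?k i) (pms (ts ! i)))"
      using LB[OF _ B] gs capi[OF i] i by blast
    then show "dp N B (ts ! i) (min N (A i)) (min N (f i)) \<le> enat (\<Sum>h\<in>pms (ts ! i). ?k i h)"
      unfolding A_def f_def by simp
  qed
  have fA: "\<forall>i<?d. f i \<le> A i" using fF_le_Amax gs B unfolding A_def f_def by auto
  have pb: "partial N B ts ?d (min N (\<Sum>i<?d. A i)) (min N (P1seq A f ?d))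
     \<le> enat (\<Sum>i<?d. \<Sum>h\<in>pms (ts ! i). ?k i h)"
    by (rule prefix_bound) (use IH fA in auto)
  obtain j where j: "j < ?d" "P1seq A f ?d + A j = (\<Sum>i<?d. A i) + f j"
    using P1seq_char[of ?d f A] fA t(2) by auto
  obtain h where h: "h \<in> pms (ts ! j)" "f j = Amax N B (ts ! j) ((?k j)(h := 0))"
    using fF_attained gs j unfolding f_def by blast
  have F: "j # h \<in> pms t" using h j t by (auto simp: pms_Switch)
  obtain C where C: "vce N B (pms t - {j # h}) (nodes t - {[], j # h}) Cs Bs C"
    using sv F unfolding is_svce_def by blast
  have Bsle: "\<forall>v\<in>nodes t - {[]}. Bs v \<le> bw t v" using sv unfolding is_svce_def by auto
  note vo = vce_to_ok[OF wf B F C Bsle]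
  let ?C = "C((j # h) := 0)"
  have xs: "cnt (ts ! i) (?C \<circ> (#) i) \<in> AS N B (ts ! i) ((Cs((j # h) := 0)) \<circ> (#) i)" if "i < ?d" for i
    using alloc_AS[of N B b ts _ ?C "Cs((j # h) := 0)" i] vo that t by auto
  have "N = (\<Sum>i<?d. cnt (ts ! i) (?C \<circ> (#) i))" using vo t by (simp add: cnt_Switch)
  also have "\<dots> \<le> (\<Sum>i<?d. (A(j := f j)) i)"
  proof (rule sum_mono)
    fix i assume i: "i \<in> {..<?d}"
    then have "cnt (ts ! i) (?C \<circ> (#) i) \<in> AS N B (ts ! i) (if i = j then (?k i)(h := 0) else ?k i)"
      using xs unfolding upd_comp by auto
    then show "cnt (ts ! i) (?C \<circ> (#) i) \<le> (A(j := f j)) i"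
      unfolding A_def h(2) by (cases "i = j") (auto intro: AS_le)
  qed
  finally have "N + A j \<le> (\<Sum>i<?d. A i) + f j" using sum_swap_one[OF j(1), of A "f j"] by simp
  then have ge: "N \<le> P1seq A f ?d" "N \<le> (\<Sum>i<?d. A i)" using j fA by auto
  have "root_tbl N B t N N = partial N B ts ?d N N" using t by simp
  also have "\<dots> \<le> partial N B ts ?d (min N (\<Sum>i<?d. A i)) (min N (P1seq A f ?d))"
    using t(2) ge by (intro partial_anti) auto
  also have "\<dots> \<le> enat (\<Sum>h\<in>pms t. Cs h)" using pb t by (simp add: sum_pms_Switch)
  finally show ?thesis .
qed


definition RS :: "nat \<Rightarrow> real \<Rightarrow> stree \<Rightarrow> (nat list \<Rightarrow> real) \<Rightarrow> (nat list \<Rightarrow> nat) \<Rightarrow> nat set" where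
  "RS N B u bwf \<kappa> = {cnt u C | C. (\<forall>h\<in>pms u. C h \<le> \<kappa> h) \<and> ok N B u bwf C}"

lemma split_sum:
  fixes m :: "nat \<Rightarrow> nat"
  shows "x \<le> (\<Sum>i<d. m i) \<Longrightarrow> \<exists>xs. (\<forall>i<d. xs i \<le> m i) \<and> (\<Sum>i<d. xs i) = x"
proof (induction d arbitrary: x)
  case 0 then show ?case by auto
next
  case (Suc d)
  define y where "y = min x (m d)"
  have "x - y \<le> (\<Sum>i<d. m i)" using Suc.prems by (auto simp: y_def)
  then obtain xs where xs: "\<forall>i<d. xs i \<le> m i" "(\<Sum>i<d. xs i) = x - y" using Suc.IH by blast
  show ?case
  proof (intro exI conjI)
    show "\<forall>i<Suc d. (xs(d := y)) i \<le> m i" using xs by (auto simp: y_def less_Suc_eq)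
    have "(\<Sum>i<d. (xs(d := y)) i) = (\<Sum>i<d. xs i)" by (rule sum.cong) auto
    then show "(\<Sum>i<Suc d. (xs(d := y)) i) = x" using xs by (simp add: y_def)
  qed
qed

lemma RS_combine:
  assumes "\<forall>i<length ts. xs i \<in> RS N B (ts ! i) (bwf \<circ> (#) i) (\<kappa> \<circ> (#) i)"
    and "lk N B (bwf []) (\<Sum>i<length ts. xs i)"
  shows "(\<Sum>i<length ts. xs i) \<in> RS N B (Switch b ts) bwf \<kappa>"
proof -
  have "\<forall>i<length ts. \<exists>C. xs i = cnt (ts ! i) C \<and> (\<forall>h\<in>pms (ts ! i). C h \<le> (\<kappa> \<circ> (#) i) h)
          \<and> ok N B (ts ! i) (bwf \<circ> (#) i) C"
    using assms(1) unfolding RS_def by blast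
  then obtain Cf where Cf: "\<forall>i<length ts. xs i = cnt (ts ! i) (Cf i) \<and> (\<forall>h\<in>pms (ts ! i). Cf i h \<le> (\<kappa> \<circ> (#) i) h)
          \<and> ok N B (ts ! i) (bwf \<circ> (#) i) (Cf i)"
    by metis
  define C where "C p = (case p of [] \<Rightarrow> 0 | i # h \<Rightarrow> Cf i h)" for p
  have comp: "C \<circ> (#) i = Cf i" for i by (rule ext) (simp add: C_def)
  have cnt: "cnt (Switch b ts) C = (\<Sum>i<length ts. xs i)"
    unfolding cnt_Switch comp using Cf by simp
  have "ok N B (Switch b ts) bwf C" using cnt assms(2) Cf by (simp add: comp)
  moreover have "\<forall>h\<in>pms (Switch b ts). C h \<le> \<kappa> h" using Cf by (auto simp: pms_Switch C_def)
  ultimately show ?thesis unfolding RS_def using cnt[symmetric] by blast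
qed

lemma RS_PM: "RS N B (PM c b) bwf \<kappa> = {x. x \<le> \<kappa> [] \<and> lk N B (bwf []) x}"
proof -
  have "x \<in> RS N B (PM c b) bwf \<kappa>" if "x \<le> \<kappa> []" "lk N B (bwf []) x" for x
    unfolding RS_def using that by (auto simp: pms_PM intro!: exI[of _ "\<lambda>_. x"])
  then show ?thesis unfolding RS_def by (auto simp: pms_PM)
qed


definition goodm :: "nat \<Rightarrow> nat \<Rightarrow> nat set \<Rightarrow> nat \<Rightarrow> bool" where
  "goodm N a R m \<longleftrightarrow> m \<le> N \<and> (\<forall>x\<le>m. x \<in> R) \<and>
     (m < a \<longrightarrow> (\<forall>x. N - m \<le> x \<and> x \<le> max a (N - m) \<longrightarrow> x \<in> R))"

lemma sum_rem: "(j::nat) < d \<Longrightarrow> (\<Sum>i<d. f i) = (f j :: nat) + (\<Sum>i\<in>{..<d} - {j}. f i)"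
  using sum.remove[of "{..<d}" j f] by simp

lemma comb_arith:
  fixes ms as :: "nat \<Rightarrow> nat" and Rs :: "nat \<Rightarrow> nat set"
  assumes gm: "\<forall>i<d. goodm N (as i) (Rs i) (ms i)"
    and aN: "\<forall>i<d. as i \<le> N" and a0N: "a0 \<le> N"
    and a0le: "a0 \<le> (\<Sum>i<d. as i)"
    and comb: "\<And>xs. (\<forall>i<d. xs i \<in> Rs i) \<Longrightarrow> min (\<Sum>i<d. xs i) (N - (\<Sum>i<d. xs i)) \<le> min a0 (N - a0)
                 \<Longrightarrow> (\<Sum>i<d. xs i) \<le> N \<Longrightarrow> (\<Sum>i<d. xs i) \<in> Rv"
  shows "\<exists>m. goodm N a0 Rv m"
proof -
  define q where "q = min a0 (N - a0)"
  define S where "S = (\<Sum>i<d. ms i)"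
  have small_in: "\<And>i y. i < d \<Longrightarrow> y \<le> ms i \<Longrightarrow> y \<in> Rs i" using gm unfolding goodm_def by blast
  have small: "x \<in> Rv" if "x \<le> S" "min x (N - x) \<le> q" "x \<le> N" for x
  proof -
    have xS: "x \<le> (\<Sum>i<d. ms i)" using that(1) S_def by simp
    obtain xs where xs: "\<forall>i<d. xs i \<le> ms i" "(\<Sum>i<d. xs i) = x"
      using split_sum[OF xS] by blast
    then show ?thesis using comb[of xs] small_in that unfolding q_def by auto
  qed
  have qN: "q \<le> N" unfolding q_def by simp
  have qcase: "q = N - a0" if "q < a0" using that unfolding q_def by (auto simp: min_def split: if_splits)
  show ?thesis
  proof (cases "(\<forall>i<d. as i \<le> ms i) \<or> a0 \<le> min q S")
    case True
    define m where "m = min q S"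
    have "goodm N a0 Rv m"
      unfolding goodm_def
    proof (intro conjI allI impI)
      show "m \<le> N" using qN by (simp add: m_def)
      fix x assume "x \<le> m"
      then show "x \<in> Rv" using small[of x] qN by (auto simp: m_def)
    next
      fix x assume lt: "m < a0" and x: "N - m \<le> x \<and> x \<le> max a0 (N - m)"
      have allsm: "\<forall>i<d. as i \<le> ms i" using True lt m_def by auto
      have "(\<Sum>i<d. as i) \<le> (\<Sum>i<d. ms i)" by (rule sum_mono) (use allsm in auto)
      then have "a0 \<le> S" unfolding S_def using a0le by linarith
      then have "m = q" "q < a0" using lt by (auto simp: m_def)
      then have "x = a0" using qcase x a0N by auto
      then show "x \<in> Rv" using small[of a0] \<open>a0 \<le> S\<close> a0N unfolding q_def by auto
    qed
    then show ?thesis by blast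
  next
    case False
    define Bg where "Bg = {i. i < d \<and> ms i < as i}"
    have Bgne: "Bg \<noteq> {}" using False by (auto simp: Bg_def not_le)
    have finBg: "finite Bg" by (simp add: Bg_def)
    have "Min (ms ` Bg) \<in> ms ` Bg" using Bgne finBg by (intro Min_in) auto
    then obtain j where j: "j \<in> Bg" "ms j = Min (ms ` Bg)" by (metis imageE)
    have jmin: "\<And>i. i \<in> Bg \<Longrightarrow> ms j \<le> ms i" using j finBg by simp
    have jd: "j < d" "ms j < as j" using j(1) by (auto simp: Bg_def)
    have msjN: "ms j \<le> N" using gm jd unfolding goodm_def by auto
    define T where "T = (\<Sum>i\<in>{..<d} - {j}. ms i)"
    have ST: "S = ms j + T" unfolding S_def T_def using sum_rem[OF jd(1)] .
    define m where "m = min q (ms j)"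
    define \<beta> where "\<beta> = max (as j) (N - ms j)"
    have bigj: "\<And>y. N - ms j \<le> y \<Longrightarrow> y \<le> \<beta> \<Longrightarrow> y \<in> Rs j"
      using gm jd unfolding goodm_def \<beta>_def by auto
    have "goodm N a0 Rv m"
      unfolding goodm_def
    proof (intro conjI allI impI)
      show "m \<le> N" using qN by (simp add: m_def)
      fix x assume "x \<le> m"
      then show "x \<in> Rv" using small[of x] qN ST by (auto simp: m_def)
    next
      fix x assume lt: "m < a0" and x: "N - m \<le> x \<and> x \<le> max a0 (N - m)"
      have U: "max a0 (N - m) \<le> \<beta> + T"
      proof (cases "\<exists>j'\<in>Bg. j' \<noteq> j")
        case True
        then obtain j' where j': "j' \<in> Bg" "j' \<noteq> j" by blast
        have "j' < d" using j' by (auto simp: Bg_def)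
        then have "ms j' \<le> T" unfolding T_def using j'(2)
          by (intro member_le_sum) auto
        then have "N \<le> \<beta> + T" using jmin[OF j'(1)] msjN unfolding \<beta>_def by auto
        then show ?thesis using a0N by auto
      next
        case False
        have sm: "\<forall>i\<in>{..<d} - {j}. as i \<le> ms i"
        proof
          fix i assume i: "i \<in> {..<d} - {j}"
          show "as i \<le> ms i"
          proof (rule ccontr)
            assume "\<not> as i \<le> ms i"
            then have "i \<in> Bg" using i by (auto simp: Bg_def)
            then show False using False i by blast
          qed
        qed
        have "a0 \<le> as j + (\<Sum>i\<in>{..<d} - {j}. as i)" using a0le sum_rem[OF jd(1), of as] by simp
        also have "\<dots> \<le> \<beta> + T" unfolding T_def \<beta>_def using sm by (intro add_mono sum_mono) auto
        finally have a0T: "a0 \<le> \<beta> + T" .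
        have "N - m \<le> \<beta> + T"
        proof (cases "m = ms j")
          case True then show ?thesis unfolding \<beta>_def by auto
        next
          case False
          then have "m = q" unfolding m_def by auto
          then have "q < a0" using lt by simp
          then have "N - m = a0" using qcase \<open>m = q\<close> a0N by auto
          then show ?thesis using a0T by simp
        qed
        then show ?thesis using a0T by simp
      qed
      define y where "y = min x \<beta>"
      define s where "s = x - y"
      have mmj: "m \<le> ms j" unfolding m_def by simp
      have yge: "N - ms j \<le> y" using x mmj unfolding y_def \<beta>_def by auto
      have yle: "y \<le> \<beta>" unfolding y_def by simp
      have sT: "s \<le> T" using x U unfolding s_def y_def by auto
      have Tsum: "(\<Sum>i<d. (ms(j := 0)) i) = T"
        using sum_rem[OF jd(1), of "ms(j := 0)"] unfolding T_def by simp
      obtain xs where xs: "\<forall>i<d. xs i \<le> (ms(j := 0)) i" "(\<Sum>i<d. xs i) = s"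
        using split_sum[of s "ms(j := 0)" d] sT Tsum by auto
      have "xs j \<le> (ms(j := 0)) j" using xs(1) jd(1) by blast
      then have xsj: "xs j = 0" by simp
      define xs' where "xs' = xs(j := y)"
      have "(\<Sum>i<d. xs' i) = y + (\<Sum>i\<in>{..<d} - {j}. xs i)"
        using sum_rem[OF jd(1), of xs'] unfolding xs'_def by simp
      also have "(\<Sum>i\<in>{..<d} - {j}. xs i) = s" using sum_rem[OF jd(1), of xs] xs(2) xsj by simp
      finally have sumx: "(\<Sum>i<d. xs' i) = x" unfolding s_def y_def by simp
      have mem: "\<forall>i<d. xs' i \<in> Rs i"
      proof (intro allI impI)
        fix i assume i: "i < d"
        show "xs' i \<in> Rs i"
        proof (cases "i = j")
          case True then show ?thesis using bigj yge yle unfolding xs'_def by simp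
        next
          case False then show ?thesis using small_in[OF i] xs(1) i unfolding xs'_def by auto
        qed
      qed
      have xN: "x \<le> N" using x a0N by auto
      have "N - x \<le> q" using x mmj unfolding m_def by auto
      then have "min x (N - x) \<le> q" by simp
      then show "x \<in> Rv" using comb[OF mem] sumx xN unfolding q_def by simp
    qed
    then show ?thesis by blast
  qed
qed


lemma realize:
  assumes h1: "\<forall>v\<in>nodes u. \<alpha> v \<le> N"
    and h2: "\<forall>h\<in>pms u. \<alpha> h \<le> \<kappa> h"
    and h3: "\<forall>v\<in>nodes u. \<forall>b ts. subtree u v = Switch b ts \<longrightarrow> \<alpha> v \<le> (\<Sum>i<length ts. \<alpha> (v @ [i]))"
    and h4: "\<forall>v\<in>nodes u. \<forall>x\<le>N. min x (N - x) \<le> min (\<alpha> v) (N - \<alpha> v) \<longrightarrow> lk N B (bwf v) x"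
  shows "\<exists>m. goodm N (\<alpha> []) (RS N B u bwf \<kappa>) m"
  using assms
proof (induction u arbitrary: \<alpha> \<kappa> bwf)
  case (PM c b)
  define q where "q = min (\<alpha> []) (N - \<alpha> [])"
  define m where "m = min q (\<kappa> [])"
  have lk0: "\<And>x. x \<le> N \<Longrightarrow> min x (N - x) \<le> q \<Longrightarrow> lk N B (bwf []) x"
    using PM.prems(4) unfolding q_def by (auto simp: nodes_PM)
  have ak: "\<alpha> [] \<le> \<kappa> []" and aN: "\<alpha> [] \<le> N" using PM.prems(1,2) by (auto simp: nodes_PM pms_PM)
  have "goodm N (\<alpha> []) (RS N B (PM c b) bwf \<kappa>) m"
    unfolding goodm_def RS_PM
  proof (intro conjI allI impI)
    show "m \<le> N" unfolding m_def q_def by auto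
    fix x assume "x \<le> m"
    then show "x \<in> {x. x \<le> \<kappa> [] \<and> lk N B (bwf []) x}" using lk0[of x] unfolding m_def q_def by auto
  next
    fix x assume lt: "m < \<alpha> []" and x: "N - m \<le> x \<and> x \<le> max (\<alpha> []) (N - m)"
    have "m = q" "q < \<alpha> []" using lt ak unfolding m_def by auto
    then have "q = N - \<alpha> []" unfolding q_def by (auto simp: min_def split: if_splits)
    then have "x = \<alpha> []" using x \<open>m = q\<close> aN by auto
    then show "x \<in> {x. x \<le> \<kappa> [] \<and> lk N B (bwf []) x}" using lk0[of x] ak aN unfolding q_def by auto
  qed
  then show ?case by blast
next
  case (Switch b ts)
  let ?d = "length ts"
  have ch: "\<exists>m. goodm N (\<alpha> [i]) (RS N B (ts ! i) (bwf \<circ> (#) i) (\<kappa> \<circ> (#) i)) m" if i: "i < ?d" for i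
  proof -
    have nd: "\<And>v. v \<in> nodes (ts ! i) \<Longrightarrow> i # v \<in> nodes (Switch b ts)" using i by (auto simp: nodes_Switch)
    have pm: "\<And>h. h \<in> pms (ts ! i) \<Longrightarrow> i # h \<in> pms (Switch b ts)" using i by (auto simp: pms_Switch)
    have "\<exists>m. goodm N ((\<alpha> \<circ> (#) i) []) (RS N B (ts ! i) (bwf \<circ> (#) i) (\<kappa> \<circ> (#) i)) m"
    proof (rule Switch.IH[OF nth_mem[OF i]])
      show "\<forall>v\<in>nodes (ts ! i). (\<alpha> \<circ> (#) i) v \<le> N" using Switch.prems(1) nd by auto
      show "\<forall>h\<in>pms (ts ! i). (\<alpha> \<circ> (#) i) h \<le> (\<kappa> \<circ> (#) i) h" using Switch.prems(2) pm by auto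
      show "\<forall>v\<in>nodes (ts ! i). \<forall>b ts'. subtree (ts ! i) v = Switch b ts' \<longrightarrow>
              (\<alpha> \<circ> (#) i) v \<le> (\<Sum>k<length ts'. (\<alpha> \<circ> (#) i) (v @ [k]))"
      proof (intro ballI allI impI)
        fix v b' ts' assume v: "v \<in> nodes (ts ! i)" and s: "subtree (ts ! i) v = Switch b' ts'"
        have "subtree (Switch b ts) (i # v) = Switch b' ts'" using s by simp
        then show "(\<alpha> \<circ> (#) i) v \<le> (\<Sum>k<length ts'. (\<alpha> \<circ> (#) i) (v @ [k]))"
          using Switch.prems(3) nd[OF v] by fastforce
      qed
      show "\<forall>v\<in>nodes (ts ! i). \<forall>x\<le>N. min x (N - x) \<le> min ((\<alpha> \<circ> (#) i) v) (N - (\<alpha> \<circ> (#) i) v)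
              \<longrightarrow> lk N B ((bwf \<circ> (#) i) v) x"
        using Switch.prems(4) nd by auto
    qed
    then show ?thesis by simp
  qed
  then obtain ms where ms: "\<forall>i<?d. goodm N (\<alpha> [i]) (RS N B (ts ! i) (bwf \<circ> (#) i) (\<kappa> \<circ> (#) i)) (ms i)"
    by metis
  have r: "[] \<in> nodes (Switch b ts)" by (simp add: nodes_def)
  have ri: "\<And>i. i < ?d \<Longrightarrow> [i] \<in> nodes (Switch b ts)" by (auto simp: nodes_Switch nodes_def)
  show ?case
  proof (rule comb_arith[OF ms])
    show "\<forall>i<?d. \<alpha> [i] \<le> N" using Switch.prems(1) ri by auto
    show "\<alpha> [] \<le> N" using Switch.prems(1) r by auto
    show "\<alpha> [] \<le> (\<Sum>i<?d. \<alpha> [i])" using Switch.prems(3) r by fastforce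
    fix xs assume xs: "\<forall>i<?d. xs i \<in> RS N B (ts ! i) (bwf \<circ> (#) i) (\<kappa> \<circ> (#) i)"
      and mn: "min (\<Sum>i<?d. xs i) (N - (\<Sum>i<?d. xs i)) \<le> min (\<alpha> []) (N - \<alpha> [])"
      and sN: "(\<Sum>i<?d. xs i) \<le> N"
    have "lk N B (bwf []) (\<Sum>i<?d. xs i)" using Switch.prems(4) r mn sN by blast
    then show "(\<Sum>i<?d. xs i) \<in> RS N B (Switch b ts) bwf \<kappa>" using RS_combine xs by blast
  qed
qed


lemma nodes_child:
  assumes "p \<in> nodes t" "subtree t p = Switch b ts" "i < length ts"
  shows "p @ [i] \<in> nodes t \<and> subtree t (p @ [i]) = ts ! i"
  using assms by (auto simp: nodes_def valid_append subtree_append)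

lemma nodes_parent:
  assumes "p @ [i] \<in> nodes t"
  shows "p \<in> nodes t \<and> (\<exists>b ts. subtree t p = Switch b ts \<and> i < length ts)"
proof -
  have v: "valid t p" "valid (subtree t p) [i]" using assms by (auto simp: nodes_def valid_append)
  then show ?thesis by (cases "subtree t p") (auto simp: nodes_def)
qed

lemma nodes_ne_parent:
  assumes "v \<in> nodes t" "v \<noteq> []"
  obtains p i b ts where "v = p @ [i]" "p \<in> nodes t" "subtree t p = Switch b ts" "i < length ts"
proof -
  have "v = butlast v @ [last v]" using assms(2) by simp
  then show ?thesis using nodes_parent[of "butlast v" "last v" t] assms(1) that by metis
qed

lemma telescope:
  fixes P Q :: "nat \<Rightarrow> enat"
  assumes "\<forall>k<d. P k + Q k = P (Suc k)"
  shows "P d = P 0 + (\<Sum>k<d. Q k)"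
  using assms by (induction d) (auto simp: add.assoc)

lemma init_vals: "init_tbl a b \<noteq> \<infinity> \<Longrightarrow> a = 0 \<and> b = 0 \<and> init_tbl a b = 0"
  by (auto simp: init_tbl_def split: if_splits)

lemma sum_enat: "(\<Sum>i\<in>A. enat (f i)) = enat (sum f A)"
  by (induction A rule: infinite_finite_induct) (auto simp: zero_enat_def)

lemma sum_enat_fin: "finite A \<Longrightarrow> (\<Sum>i\<in>A. g i) \<noteq> (\<infinity>::enat) \<Longrightarrow> i \<in> A \<Longrightarrow> g i \<noteq> \<infinity>"
  by (induction A rule: finite_induct) (auto simp: plus_eq_infty_iff_enat)

locale run =
  fixes N :: nat and B :: real and t :: stree and tg :: "nat list \<Rightarrow> nat \<times> nat"
    and st :: "nat list \<Rightarrow> nat \<Rightarrow> nat \<times> nat" and Cs :: "nat list \<Rightarrow> nat" and Bs :: "nat list \<Rightarrow> real"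
  assumes wf: "wf_substrate t" and Npos: "0 < N" and Bpos: "0 < B"
    and run: "bt_run N B t tg st"
    and fin: "root_tbl N B t N N \<noteq> \<infinity>"
    and Csd: "\<forall>h\<in>pms t. enat (Cs h) = dp N B (subtree t h) (fst (tg h)) (snd (tg h))"
    and Bsd: "\<forall>v\<in>nodes t - {[]}. Bs v = hose N B (eff N B t v (tg v))"
begin

definition val :: "nat list \<Rightarrow> enat" where
  "val p = (if p = [] then root_tbl N B t N N else dp N B (subtree t p) (fst (tg p)) (snd (tg p)))"

lemma root_sw: obtains b0 ts0 where "t = Switch b0 ts0" "ts0 \<noteq> []" "\<forall>i<length ts0. good (ts0 ! i)"
  using wf_root[OF wf] by blast

lemma chain:
  assumes "p \<in> nodes t" "subtree t p = Switch b ts"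
  shows "st p (length ts) = eff N B t p (tg p) \<and>
        (\<forall>k < length ts.
           fst (st p k) \<le> N \<and> snd (st p k) \<le> N \<and>
           fst (tg (p @ [k])) \<le> N \<and> snd (tg (p @ [k])) \<le> N \<and>
           fst (st p (Suc k)) \<le> fst (st p k) + fst (tg (p @ [k])) \<and>
           snd (st p (Suc k)) \<le> min (fst (st p k) + snd (tg (p @ [k])))
                                    (fst (tg (p @ [k])) + snd (st p k)) \<and>
           partial N B ts k (fst (st p k)) (snd (st p k))
             + dp N B (ts ! k) (fst (tg (p @ [k]))) (snd (tg (p @ [k])))
           = partial N B ts (Suc k) (fst (st p (Suc k))) (snd (st p (Suc k))))"
  using run assms unfolding bt_run_def by blast

lemma bw_nn: "v \<in> nodes t \<Longrightarrow> v \<noteq> [] \<Longrightarrow> 0 \<le> bw t v"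
  using wf_bw[OF wf] by blast

lemma val_switch:
  assumes "p \<in> nodes t" "subtree t p = Switch b ts"
  shows "val p = partial N B ts (length ts) (fst (st p (length ts))) (snd (st p (length ts)))"
proof (cases "p = []")
  case True
  then have "t = Switch b ts" using assms by simp
  then have r: "root_tbl N B t N N = partial N B ts (length ts) N N" by simp
  have "tg [] = (N, N)" using run by (simp add: bt_run_def)
  then have "st p (length ts) = (N, N)" using chain[OF assms] True by (simp add: eff_def)
  then show ?thesis using r True by (simp add: val_def)
next
  case False
  have "bw t p = b" using assms by (simp add: bw_def)
  then show ?thesis using chain[OF assms] False assms(2)
    by (simp add: val_def eff_def dp_Switch del: dp.simps)
qed

lemma val_sum:
  assumes "p \<in> nodes t" "subtree t p = Switch b ts" "val p \<noteq> \<infinity>"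
  shows "val p = (\<Sum>k<length ts. val (p @ [k]))"
proof -
  let ?P = "\<lambda>k. partial N B ts k (fst (st p k)) (snd (st p k))"
  let ?Q = "\<lambda>k. dp N B (ts ! k) (fst (tg (p @ [k]))) (snd (tg (p @ [k])))"
  have tel: "?P (length ts) = ?P 0 + (\<Sum>k<length ts. ?Q k)"
    by (rule telescope) (use chain[OF assms(1,2)] in auto)
  have "?P (length ts) \<noteq> \<infinity>" using val_switch[OF assms(1,2)] assms(3) by simp
  then have "?P 0 + (\<Sum>k<length ts. ?Q k) \<noteq> \<infinity>" using tel by simp
  then have "?P 0 \<noteq> \<infinity>" by (simp only: plus_eq_infty_iff_enat) simp
  then have "?P 0 = 0" using init_vals by simp
  moreover have "?Q k = val (p @ [k])" if "k < length ts" for k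
    using nodes_child[OF assms(1,2) that] by (simp add: val_def)
  ultimately show ?thesis using tel val_switch[OF assms(1,2)] by simp
qed

lemma val_fin: "p \<in> nodes t \<Longrightarrow> val p \<noteq> \<infinity>"
proof (induction p rule: rev_induct)
  case Nil then show ?case using fin by (simp add: val_def)
next
  case (snoc i p)
  obtain b ts where p: "p \<in> nodes t" "subtree t p = Switch b ts" "i < length ts"
    using nodes_parent[OF snoc.prems] by blast
  have "val p = (\<Sum>k<length ts. val (p @ [k]))" using val_sum p snoc.IH by blast
  then have "(\<Sum>k<length ts. val (p @ [k])) \<noteq> \<infinity>" using snoc.IH p by simp
  then show ?case using p(3) sum_enat_fin[of "{..<length ts}" "\<lambda>k. val (p @ [k])" i] by simp
qed

lemma val_cost:
  "p \<in> nodes t \<Longrightarrow> subtree t p = u \<Longrightarrow> val p = enat (\<Sum>h\<in>pms u. Cs (p @ h))"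
proof (induction u arbitrary: p)
  case (PM c b)
  have "p \<noteq> []" using PM root_sw by (metis stree.distinct(1) subtree.simps(1))
  have "p \<in> pms t" using PM by (simp add: pms_def nodes_def)
  then show ?case using Csd \<open>p \<noteq> []\<close> by (simp add: val_def pms_PM)
next
  case (Switch b ts)
  have "val p = (\<Sum>k<length ts. val (p @ [k]))" using val_sum Switch.prems val_fin by blast
  also have "\<dots> = (\<Sum>k<length ts. enat (\<Sum>h\<in>pms (ts ! k). Cs ((p @ [k]) @ h)))"
  proof (rule sum.cong)
    fix k assume "k \<in> {..<length ts}"
    then have k: "k < length ts" by simp
    have "val (p @ [k]) = enat (\<Sum>h\<in>pms (ts ! k). Cs ((p @ [k]) @ h))"
      using Switch.IH[OF nth_mem[OF k]] nodes_child[OF Switch.prems k] by blast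
    then show "val (p @ [k]) = enat (\<Sum>h\<in>pms (ts ! k). Cs ((p @ [k]) @ h))" .
  qed simp
  also have "\<dots> = enat (\<Sum>h\<in>pms (Switch b ts). Cs (p @ h))"
    by (simp add: sum_pms_Switch sum_enat)
  finally show ?case .
qed

lemma total_cost: "enat (\<Sum>h\<in>pms t. Cs h) = root_tbl N B t N N"
  using val_cost[of "[]" t] by (simp add: val_def nodes_def)

end


lemma ok_to_vce:
  assumes okC: "ok N B t (Bs([] := X)) C" and le: "\<forall>h\<in>pms t. C h \<le> (Cs(F := 0)) h"
    and cn: "cnt t C = N" and F: "F \<in> pms t"
  shows "vce N B (pms t - {F}) (nodes t - {[], F}) Cs Bs C"
proof -
  have "C F \<le> (Cs(F := 0)) F" using le F by blast
  then have CF: "C F = 0" by simp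
  have sumeq: "(\<Sum>h\<in>S. C h) = (\<Sum>h\<in>S - {F}. C h)" if "finite S" for S
  proof (cases "F \<in> S")
    case True then show ?thesis using that CF sum.remove[of S F C] by simp
  next
    case False then show ?thesis by simp
  qed
  have s1: "(\<Sum>h\<in>pms t - {F}. C h) = N" using sumeq[OF finite_pms] cn by (simp add: cnt_def)
  have s2: "lk N B (Bs v) (\<Sum>h\<in>{h\<in>pms t - {F}. \<exists>q. h = v @ q}. C h)" if v: "v \<in> nodes t - {[], F}" for v
  proof -
    have "lk N B ((Bs([] := X)) v) (\<Sum>h\<in>{h\<in>pms t. \<exists>q. h = v @ q}. C h)" using okC v unfolding ok_iff by blast
    moreover have "{h\<in>pms t. \<exists>q. h = v @ q} - {F} = {h\<in>pms t - {F}. \<exists>q. h = v @ q}" by auto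
    moreover have "finite {h\<in>pms t. \<exists>q. h = v @ q}" using finite_pms by auto
    ultimately show ?thesis using sumeq v by auto
  qed
  show ?thesis unfolding vce_def Let_def using le s1 s2 by (auto simp: lk_def split: if_splits)
qed

lemma lk_hose:
  assumes "0 < B" "x \<le> N" "a \<le> N" "min x (N - x) \<le> min a (N - a)" "a = fst e \<or> a = snd e"
    "fst e \<le> N" "snd e \<le> N"
  shows "lk N B (hose N B e) x"
proof -
  have "min (real x) (real N - real x) = real (min x (N - x))" using assms(2) by (simp add: of_nat_diff)
  also have "\<dots> \<le> real (min a (N - a))" using assms(4) by linarith
  also have "\<dots> = min (real a) (real N - real a)" using assms(3) by (simp add: of_nat_diff)
  also have "\<dots> \<le> max (min (real (fst e)) (real N - real (fst e))) (min (real (snd e)) (real N - real (snd e)))"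
    using assms(5) by auto
  finally have "min (real x) (real N - real x) * B \<le> max (min (real (fst e)) (real N - real (fst e))) (min (real (snd e)) (real N - real (snd e))) * B"
    using assms(1) by (intro mult_right_mono) auto
  then show ?thesis unfolding lk_def hose_def by (simp add: mult.commute)
qed

context run begin

lemma chain_k:
  assumes "p \<in> nodes t" "subtree t p = Switch b ts" "k < length ts"
  shows "fst (st p k) \<le> N \<and> snd (st p k) \<le> N \<and>
           fst (tg (p @ [k])) \<le> N \<and> snd (tg (p @ [k])) \<le> N \<and>
           fst (st p (Suc k)) \<le> fst (st p k) + fst (tg (p @ [k])) \<and>
           snd (st p (Suc k)) \<le> fst (st p k) + snd (tg (p @ [k])) \<and>
           snd (st p (Suc k)) \<le> fst (tg (p @ [k])) + snd (st p k)"
proof -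
  have "\<forall>k < length ts.
           fst (st p k) \<le> N \<and> snd (st p k) \<le> N \<and>
           fst (tg (p @ [k])) \<le> N \<and> snd (tg (p @ [k])) \<le> N \<and>
           fst (st p (Suc k)) \<le> fst (st p k) + fst (tg (p @ [k])) \<and>
           snd (st p (Suc k)) \<le> min (fst (st p k) + snd (tg (p @ [k])))
                                    (fst (tg (p @ [k])) + snd (st p k))"
    using chain[OF assms(1,2)] by blast
  then show ?thesis using assms(3) by simp
qed

lemma tg_root: "tg [] = (N, N)" using run by (simp add: bt_run_def)

lemma tg_le: "v \<in> nodes t \<Longrightarrow> fst (tg v) \<le> N \<and> snd (tg v) \<le> N"
proof (cases "v = []")
  case True then show ?thesis using tg_root by simp
next
  case False
  assume v: "v \<in> nodes t"
  obtain p i b ts where "v = p @ [i]" "p \<in> nodes t" "subtree t p = Switch b ts" "i < length ts"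
    using nodes_ne_parent[OF v False] by blast
  then show ?thesis using chain_k by blast
qed

lemma eff_nonroot: "v \<noteq> [] \<Longrightarrow> eff N B t v x = (mv N B (bw t v) (fst x), mv N B (bw t v) (snd x))"
  by (simp add: eff_def)

lemma eff_le: "v \<in> nodes t \<Longrightarrow> fst (eff N B t v (tg v)) \<le> N \<and> snd (eff N B t v (tg v)) \<le> N"
proof (cases "v = []")
  case True then show ?thesis using tg_root by (simp add: eff_def)
next
  case False
  assume v: "v \<in> nodes t"
  have b: "0 \<le> bw t v" using bw_nn v False by blast
  show ?thesis using tg_le[OF v] mv_le[OF Bpos b] False by (simp add: eff_def)
qed

lemma eff_ge:
  assumes "v \<in> nodes t" "v \<noteq> []"
  shows "fst (tg v) \<le> fst (eff N B t v (tg v)) \<and> snd (tg v) \<le> snd (eff N B t v (tg v))"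
proof -
  have b: "0 \<le> bw t v" using bw_nn assms by blast
  show ?thesis using assms(2) mv_ge[OF Bpos b] by (simp add: eff_def)
qed

lemma pm_nonroot:
  assumes "h \<in> pms t" shows "h \<noteq> []"
proof
  assume "h = []"
  then have "is_pm t" using assms by (simp add: pms_def)
  moreover obtain b0 ts0 where "t = Switch b0 ts0" using root_sw by blast
  ultimately show False by simp
qed

lemma leaf_facts:
  assumes h: "h \<in> pms t"
  shows "snd (tg h) = 0 \<and> Cs h = mv N B (bw t h) (fst (tg h)) \<and> Cs h \<le> cap t h"
proof -
  have hn: "h \<in> nodes t" "h \<noteq> []" using h pm_nonroot pms_sub_nodes by auto
  obtain c b where s: "subtree t h = PM c b" using h by (cases "subtree t h") (auto simp: pms_def)
  have "val h \<noteq> \<infinity>" using val_fin hn by simp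
  then have lf: "leaf_tbl N B c b (fst (tg h)) (snd (tg h)) \<noteq> \<infinity>" using s hn by (simp add: val_def)
  have b: "bw t h = b" "cap t h = c" using s by (auto simp: bw_def cap_def)
  have "0 \<le> b" using bw_nn[OF hn] b by simp
  note L = leaf_fin[OF Bpos this lf]
  have E: "enat (Cs h) = leaf_tbl N B c b (fst (tg h)) (snd (tg h))" using Csd h s by simp
  have "enat (Cs h) = enat (mv N B b (fst (tg h)))" using trans[OF E conjunct1[OF conjunct2[OF L]]] .
  then have "Cs h = mv N B b (fst (tg h))" by simp
  then show ?thesis using L b by simp
qed

lemma st_zero:
  assumes "p \<in> nodes t" "subtree t p = Switch b ts"
  shows "st p 0 = (0, 0)"
proof -
  let ?P = "\<lambda>k. partial N B ts k (fst (st p k)) (snd (st p k))"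
  let ?Q = "\<lambda>k. dp N B (ts ! k) (fst (tg (p @ [k]))) (snd (tg (p @ [k])))"
  have tel: "?P (length ts) = ?P 0 + (\<Sum>k<length ts. ?Q k)"
    by (rule telescope) (use chain[OF assms(1,2)] in auto)
  have "?P (length ts) \<noteq> \<infinity>" using val_switch[OF assms(1,2)] val_fin[OF assms(1)] by simp
  then have "?P 0 + (\<Sum>k<length ts. ?Q k) \<noteq> \<infinity>" using tel by simp
  then have "?P 0 \<noteq> \<infinity>" by (simp only: plus_eq_infty_iff_enat) simp
  then show ?thesis using init_vals[of "fst (st p 0)" "snd (st p 0)"] by (simp add: prod_eq_iff)
qed

lemma chainA:
  assumes "p \<in> nodes t" "subtree t p = Switch b ts"
  shows "k \<le> length ts \<Longrightarrow> fst (st p k) \<le> (\<Sum>i<k. fst (tg (p @ [i])))"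
proof (induction k)
  case 0 then show ?case using st_zero[OF assms] by simp
next
  case (Suc k)
  then have "k < length ts" by simp
  then have "fst (st p (Suc k)) \<le> fst (st p k) + fst (tg (p @ [k]))" using chain_k[OF assms] by blast
  then show ?case using Suc by simp
qed

lemma chainB:
  assumes "p \<in> nodes t" "subtree t p = Switch b ts" "j < length ts"
  shows "j < k \<Longrightarrow> k \<le> length ts \<Longrightarrow>
     snd (st p k) \<le> (\<Sum>i<k. if i = j then snd (tg (p @ [i])) else fst (tg (p @ [i])))"
proof (induction k)
  case 0 then show ?case by simp
next
  case (Suc k)
  have kd: "k < length ts" using Suc.prems by simp
  note C = chain_k[OF assms(1,2) kd]
  show ?case
  proof (cases "k = j")
    case True
    have "snd (st p (Suc k)) \<le> fst (st p k) + snd (tg (p @ [k]))" using C by blast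
    also have "\<dots> \<le> (\<Sum>i<k. fst (tg (p @ [i]))) + snd (tg (p @ [k]))"
      using chainA[OF assms(1,2), of k] kd by simp
    also have "(\<Sum>i<k. fst (tg (p @ [i]))) = (\<Sum>i<k. if i = j then snd (tg (p @ [i])) else fst (tg (p @ [i])))"
      using True by (intro sum.cong) auto
    finally show ?thesis using True by simp
  next
    case False
    then have "j < k" using Suc.prems by auto
    have "snd (st p (Suc k)) \<le> fst (tg (p @ [k])) + snd (st p k)" using C by blast
    also have "\<dots> \<le> fst (tg (p @ [k])) + (\<Sum>i<k. if i = j then snd (tg (p @ [i])) else fst (tg (p @ [i])))"
      using Suc.IH \<open>j < k\<close> kd by simp
    finally show ?thesis using False by simp
  qed
qed

end


lemma hose_bounds:
  assumes B: "0 < B" and b: "0 \<le> b" and e: "fst e \<le> N" "snd e \<le> N"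
    and l: "inLam N B b (fst e)" "inLam N B b (snd e)"
  shows "0 \<le> hose N B e \<and> hose N B e \<le> b"
proof -
  have l1: "min (real (fst e)) (real N - real (fst e)) * B \<le> b" using inLam_lk[OF B b l(1)] by (simp add: lk_def)
  have l2: "min (real (snd e)) (real N - real (snd e)) * B \<le> b" using inLam_lk[OF B b l(2)] by (simp add: lk_def)
  have nn: "0 \<le> min (real (fst e)) (real N - real (fst e))" using e by simp
  have "hose N B e = max (min (real (fst e)) (real N - real (fst e)) * B) (min (real (snd e)) (real N - real (snd e)) * B)"
  proof -
    have "B * max a c = max (a * B) (c * B)" for a c :: real
      using B by (auto simp: max_def mult.commute)
    then show ?thesis unfolding hose_def by simp
  qed
  then show ?thesis using l1 l2 nn B by (auto simp: max_def)
qed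

context run begin

definition alp :: "nat list \<Rightarrow> nat list \<Rightarrow> nat" where
  "alp F v = (if \<exists>q. F = v @ q then snd (eff N B t v (tg v)) else fst (eff N B t v (tg v)))"

lemma alp_h1: "v \<in> nodes t \<Longrightarrow> alp F v \<le> N"
  using eff_le by (simp add: alp_def)

lemma alp_h2:
  assumes F: "F \<in> pms t" and h: "h \<in> pms t"
  shows "alp F h \<le> (Cs(F := 0)) h"
proof (cases "h = F")
  case True
  have hn: "h \<in> nodes t" "h \<noteq> []" using h pm_nonroot pms_sub_nodes by auto
  have b: "0 \<le> bw t h" using bw_nn hn by blast
  have "inLam N B (bw t h) 0" using b Bpos by (simp add: inLam_def divide_nonneg_pos)
  then have "mv N B (bw t h) 0 = 0" by (simp add: mv_def)
  then show ?thesis using True leaf_facts[OF h] hn by (simp add: alp_def eff_def)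
next
  case False
  have "\<not> (\<exists>q. F = h @ q)"
  proof
    assume "\<exists>q. F = h @ q"
    then obtain q where q: "F = h @ q" by blast
    have "valid t h" "is_pm (subtree t h)" "valid t (h @ q)" using h F q by (auto simp: pms_def)
    then have "q = []" by (rule pm_ext)
    then show False using q False by simp
  qed
  then show ?thesis using False leaf_facts[OF h] pm_nonroot[OF h] by (simp add: alp_def eff_def)
qed

lemma alp_h3:
  assumes F: "F \<in> pms t" and v: "v \<in> nodes t" and s: "subtree t v = Switch b ts"
  shows "alp F v \<le> (\<Sum>i<length ts. alp F (v @ [i]))"
proof -
  have sd: "st v (length ts) = eff N B t v (tg v)" using chain[OF v s] by blast
  have cn: "\<And>i. i < length ts \<Longrightarrow> v @ [i] \<in> nodes t" using nodes_child[OF v s] by blast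
  show ?thesis
  proof (cases "\<exists>q. F = v @ q")
    case True
    then obtain q where q: "F = v @ q" by blast
    have "q \<noteq> []" using q F s by (auto simp: pms_def)
    then obtain j q' where jq: "q = j # q'" by (cases q) auto
    have "valid t (v @ j # q')" using F q jq by (simp add: pms_def)
    then have j: "j < length ts" using s by (simp add: valid_append)
    have "alp F v = snd (st v (length ts))" using True sd by (simp add: alp_def)
    also have "\<dots> \<le> (\<Sum>i<length ts. if i = j then snd (tg (v @ [i])) else fst (tg (v @ [i])))"
      using chainB[OF v s j, of "length ts"] j by simp
    also have "\<dots> \<le> (\<Sum>i<length ts. alp F (v @ [i]))"
    proof (rule sum_mono)
      fix i assume "i \<in> {..<length ts}"
      then have i: "i < length ts" by simp
      note g = eff_ge[OF cn[OF i]]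
      show "(if i = j then snd (tg (v @ [i])) else fst (tg (v @ [i]))) \<le> alp F (v @ [i])"
      proof (cases "i = j")
        case True
        have "\<exists>q. F = (v @ [i]) @ q" using q jq True by simp
        then show ?thesis using True g by (simp add: alp_def)
      next
        case False
        have "\<not> (\<exists>q. F = (v @ [i]) @ q)" using q jq False by auto
        then show ?thesis using False g by (simp add: alp_def)
      qed
    qed
    finally show ?thesis .
  next
    case False
    have "alp F v = fst (st v (length ts))" using False sd by (simp add: alp_def)
    also have "\<dots> \<le> (\<Sum>i<length ts. fst (tg (v @ [i])))" using chainA[OF v s] by simp
    also have "\<dots> \<le> (\<Sum>i<length ts. alp F (v @ [i]))"
    proof (rule sum_mono)
      fix i assume "i \<in> {..<length ts}"
      then have i: "i < length ts" by simp
      have "\<not> (\<exists>q. F = (v @ [i]) @ q)" using False by auto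
      then show "fst (tg (v @ [i])) \<le> alp F (v @ [i])" using eff_ge[OF cn[OF i]] by (simp add: alp_def)
    qed
    finally show ?thesis .
  qed
qed

lemma alp_h4:
  assumes v: "v \<in> nodes t" and x: "x \<le> N" and m: "min x (N - x) \<le> min (alp F v) (N - alp F v)"
  shows "lk N B ((Bs([] := real N * B)) v) x"
proof (cases "v = []")
  case True
  have "min (real x) (real N - real x) \<le> real N" by auto
  then have "min (real x) (real N - real x) * B \<le> real N * B" using Bpos by (intro mult_right_mono) auto
  then show ?thesis using True by (simp add: lk_def)
next
  case False
  have "Bs v = hose N B (eff N B t v (tg v))" using Bsd v False by blast
  moreover have "lk N B (hose N B (eff N B t v (tg v))) x"
    by (rule lk_hose[OF Bpos x alp_h1[OF v] m]) (use eff_le[OF v] in \<open>auto simp: alp_def\<close>)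
  ultimately show ?thesis using False by simp
qed

lemma vce_exists:
  assumes F: "F \<in> pms t"
  shows "\<exists>C. vce N B (pms t - {F}) (nodes t - {[], F}) Cs Bs C"
proof -
  have "\<exists>m. goodm N (alp F []) (RS N B t (Bs([] := real N * B)) (Cs(F := 0))) m"
  proof (rule realize)
    show "\<forall>v\<in>nodes t. alp F v \<le> N" using alp_h1 by blast
    show "\<forall>h\<in>pms t. alp F h \<le> (Cs(F := 0)) h" using alp_h2[OF F] by blast
    show "\<forall>v\<in>nodes t. \<forall>b ts. subtree t v = Switch b ts \<longrightarrow> alp F v \<le> (\<Sum>i<length ts. alp F (v @ [i]))"
      using alp_h3[OF F] by blast
    show "\<forall>v\<in>nodes t. \<forall>x\<le>N. min x (N - x) \<le> min (alp F v) (N - alp F v) \<longrightarrow> lk N B ((Bs([] := real N * B)) v) x"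
      using alp_h4 by blast
  qed
  then have "\<exists>m. goodm N N (RS N B t (Bs([] := real N * B)) (Cs(F := 0))) m"
    using tg_root by (simp add: alp_def eff_def)
  then obtain m where m: "goodm N N (RS N B t (Bs([] := real N * B)) (Cs(F := 0))) m" by blast
  have "N \<in> RS N B t (Bs([] := real N * B)) (Cs(F := 0))"
  proof (cases "m < N")
    case True then show ?thesis using m unfolding goodm_def by auto
  next
    case False then show ?thesis using m unfolding goodm_def by auto
  qed
  then obtain C where "N = cnt t C" "\<forall>h\<in>pms t. C h \<le> (Cs(F := 0)) h" "ok N B t (Bs([] := real N * B)) C"
    unfolding RS_def by blast
  then show ?thesis using ok_to_vce F by metis
qed

lemma svce: "is_svce N B t Cs Bs"
  unfolding is_svce_def
proof (intro conjI ballI)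
  fix h assume "h \<in> pms t" then show "Cs h \<le> cap t h" using leaf_facts by blast
next
  fix v assume v: "v \<in> nodes t - {[]}"
  then have vn: "v \<in> nodes t" "v \<noteq> []" by auto
  have b: "0 \<le> bw t v" using bw_nn vn by blast
  have "0 \<le> hose N B (eff N B t v (tg v)) \<and> hose N B (eff N B t v (tg v)) \<le> bw t v"
    by (rule hose_bounds[OF Bpos b]) (use eff_le[OF vn(1)] inLam_mv[OF Bpos b] vn(2) in \<open>auto simp: eff_def\<close>)
  then show "0 \<le> Bs v" "Bs v \<le> bw t v" using Bsd v by auto
next
  fix F assume "F \<in> pms t" then show "\<exists>C. vce N B (pms t - {F}) (nodes t - {[], F}) Cs Bs C"
    using vce_exists by blast
qed

end


definition chainP :: "nat \<Rightarrow> real \<Rightarrow> stree list \<Rightarrow> nat \<Rightarrow> nat \<times> nat \<Rightarrow> (nat \<Rightarrow> nat \<times> nat) \<Rightarrow> (nat \<Rightarrow> nat \<times> nat) \<Rightarrow> bool" where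
  "chainP N B ts k e cs ct \<longleftrightarrow> cs k = e \<and>
     (\<forall>j < k.
           fst (cs j) \<le> N \<and> snd (cs j) \<le> N \<and>
           fst (ct j) \<le> N \<and> snd (ct j) \<le> N \<and>
           fst (cs (Suc j)) \<le> fst (cs j) + fst (ct j) \<and>
           snd (cs (Suc j)) \<le> min (fst (cs j) + snd (ct j)) (fst (ct j) + snd (cs j)) \<and>
           partial N B ts j (fst (cs j)) (snd (cs j)) + dp N B (ts ! j) (fst (ct j)) (snd (ct j))
           = partial N B ts (Suc j) (fst (cs (Suc j))) (snd (cs (Suc j))))"

lemma chain_exists:
  "k \<le> length ts \<Longrightarrow> fst e \<le> N \<Longrightarrow> snd e \<le> N \<Longrightarrow> partial N B ts k (fst e) (snd e) \<noteq> \<infinity> \<Longrightarrow>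
   \<exists>cs ct. chainP N B ts k e cs ct"
proof (induction k arbitrary: e)
  case 0
  show ?case by (rule exI[of _ "\<lambda>_. e"]) (simp add: chainP_def)
next
  case (Suc k)
  have k: "k < length ts" using Suc.prems by simp
  obtain a0 a1 b0 b1 where ab: "a0 \<le> N" "a1 \<le> N" "b0 \<le> N" "b1 \<le> N" "fst e \<le> a0 + b0"
    "snd e \<le> min (a0 + b1) (b0 + a1)"
    "combine N (partial N B ts k) (dp N B (ts ! k)) (fst e) (snd e) = partial N B ts k a0 a1 + dp N B (ts ! k) b0 b1"
    using combine_attained[OF Suc.prems(2,3)] by blast
  have eq: "partial N B ts (Suc k) (fst e) (snd e) = partial N B ts k a0 a1 + dp N B (ts ! k) b0 b1"
    using ab(7) partial_Suc[OF k] by simp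
  then have "partial N B ts k a0 a1 + dp N B (ts ! k) b0 b1 \<noteq> \<infinity>" using Suc.prems(4) by simp
  then have "partial N B ts k a0 a1 \<noteq> \<infinity>" by (simp only: plus_eq_infty_iff_enat) simp
  then obtain cs ct where c: "chainP N B ts k (a0, a1) cs ct" using Suc.IH[of "(a0, a1)"] k ab by auto
  define cs' where "cs' = cs(Suc k := e)"
  define ct' where "ct' = ct(k := (b0, b1))"
  have "chainP N B ts (Suc k) e cs' ct'"
    unfolding chainP_def
  proof (rule conjI)
    show "cs' (Suc k) = e" by (simp add: cs'_def)
  next
    show "\<forall>j < Suc k.
           fst (cs' j) \<le> N \<and> snd (cs' j) \<le> N \<and>
           fst (ct' j) \<le> N \<and> snd (ct' j) \<le> N \<and>
           fst (cs' (Suc j)) \<le> fst (cs' j) + fst (ct' j) \<and>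
           snd (cs' (Suc j)) \<le> min (fst (cs' j) + snd (ct' j)) (fst (ct' j) + snd (cs' j)) \<and>
           partial N B ts j (fst (cs' j)) (snd (cs' j)) + dp N B (ts ! j) (fst (ct' j)) (snd (ct' j))
           = partial N B ts (Suc j) (fst (cs' (Suc j))) (snd (cs' (Suc j)))"
    proof (intro allI impI)
    fix j assume j: "j < Suc k"
    show "fst (cs' j) \<le> N \<and> snd (cs' j) \<le> N \<and>
           fst (ct' j) \<le> N \<and> snd (ct' j) \<le> N \<and>
           fst (cs' (Suc j)) \<le> fst (cs' j) + fst (ct' j) \<and>
           snd (cs' (Suc j)) \<le> min (fst (cs' j) + snd (ct' j)) (fst (ct' j) + snd (cs' j)) \<and>
           partial N B ts j (fst (cs' j)) (snd (cs' j)) + dp N B (ts ! j) (fst (ct' j)) (snd (ct' j))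
           = partial N B ts (Suc j) (fst (cs' (Suc j))) (snd (cs' (Suc j)))"
    proof (cases "j = k")
      case True
      have "cs k = (a0, a1)" using c by (simp add: chainP_def)
      then show ?thesis using True ab eq by (simp add: cs'_def ct'_def)
    next
      case False
      then have "j < k" using j by simp
      then show ?thesis using c unfolding chainP_def cs'_def ct'_def by auto
    qed
    qed
  qed
  then show ?case by blast
qed

definition CH :: "nat \<Rightarrow> real \<Rightarrow> stree list \<Rightarrow> nat \<times> nat \<Rightarrow> (nat \<Rightarrow> nat \<times> nat) \<times> (nat \<Rightarrow> nat \<times> nat)" where
  "CH N B ts e = (SOME x. chainP N B ts (length ts) e (fst x) (snd x))"

lemma CH_spec:
  "fst e \<le> N \<Longrightarrow> snd e \<le> N \<Longrightarrow> partial N B ts (length ts) (fst e) (snd e) \<noteq> \<infinity> \<Longrightarrow>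
   chainP N B ts (length ts) e (fst (CH N B ts e)) (snd (CH N B ts e))"
  unfolding CH_def using chain_exists[of "length ts" ts e N B]
  by (metis (mono_tags, lifting) order_refl prod.sel someI_ex)

fun walk :: "nat \<Rightarrow> real \<Rightarrow> stree \<Rightarrow> nat \<times> nat \<Rightarrow> nat list \<Rightarrow> nat \<times> nat" where
  "walk N B u x [] = x"
| "walk N B (PM c b) x (i # p) = x"
| "walk N B (Switch b ts) x (i # p) =
     walk N B (ts ! i) (snd (CH N B ts (mv N B b (fst x), mv N B b (snd x))) i) p"

fun tgf :: "nat \<Rightarrow> real \<Rightarrow> stree \<Rightarrow> nat list \<Rightarrow> nat \<times> nat" where
  "tgf N B t [] = (N, N)"
| "tgf N B (PM c b) (i # p) = (N, N)"
| "tgf N B (Switch b ts) (i # p) = walk N B (ts ! i) (snd (CH N B ts (N, N)) i) p"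

lemma walk_snoc:
  "valid u p \<Longrightarrow> subtree u p = Switch b ts \<Longrightarrow>
   walk N B u x (p @ [i]) = snd (CH N B ts (mv N B b (fst (walk N B u x p)), mv N B b (snd (walk N B u x p)))) i"
proof (induction u p arbitrary: x rule: valid.induct)
  case (1 t)
  then show ?case by simp
next
  case (2 c b i p) then show ?case by simp
next
  case (3 b' ts' k p)
  then show ?case by simp
qed

lemma tgf_snoc:
  assumes "valid t p" "subtree t p = Switch b ts"
  shows "tgf N B t (p @ [i]) = snd (CH N B ts (eff N B t p (tgf N B t p))) i"
proof (cases p)
  case Nil
  then show ?thesis using assms by (simp add: eff_def)
next
  case (Cons j p')
  obtain b0 ts0 where t: "t = Switch b0 ts0" using assms Cons by (cases t) auto
  have v: "valid (ts0 ! j) p'" "subtree (ts0 ! j) p' = Switch b ts" using assms Cons t by auto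
  have bw: "bw t p = b" using assms by (simp add: bw_def)
  show ?thesis using walk_snoc[OF v] Cons t bw by (simp add: eff_def)
qed


fun kids :: "stree \<Rightarrow> stree list" where
  "kids (Switch b ts) = ts"
| "kids (PM c b) = []"

locale finroot =
  fixes N :: nat and B :: real and t :: stree
  assumes wf: "wf_substrate t" and Bpos: "0 < B"
    and fin: "root_tbl N B t N N \<noteq> \<infinity>"
begin

abbreviation TG where "TG \<equiv> tgf N B t"
definition ST where "ST p = fst (CH N B (kids (subtree t p)) (eff N B t p (TG p)))"

lemma inv_step:
  assumes p: "p \<in> nodes t" "subtree t p = Switch b ts"
    and ip: "fst (TG p) \<le> N \<and> snd (TG p) \<le> N \<and> (p \<noteq> [] \<longrightarrow> dp N B (subtree t p) (fst (TG p)) (snd (TG p)) \<noteq> \<infinity>)"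
  shows "chainP N B ts (length ts) (eff N B t p (TG p)) (ST p) (snd (CH N B ts (eff N B t p (TG p))))"
proof -
  have "fst (eff N B t p (TG p)) \<le> N \<and> snd (eff N B t p (TG p)) \<le> N \<and>
        partial N B ts (length ts) (fst (eff N B t p (TG p))) (snd (eff N B t p (TG p))) \<noteq> \<infinity>"
  proof (cases "p = []")
    case True
    then have "t = Switch b ts" using p by simp
    then show ?thesis using fin True by (simp add: eff_def)
  next
    case False
    have b: "0 \<le> bw t p" using wf_bw[OF wf p(1) False] .
    have bb: "bw t p = b" using p by (simp add: bw_def)
    have "dp N B (Switch b ts) (fst (TG p)) (snd (TG p)) \<noteq> \<infinity>" using ip False p by simp
    then show ?thesis using False mv_le[OF Bpos b] ip bb
      by (simp add: eff_def dp_Switch del: dp.simps)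
  qed
  then show ?thesis using CH_spec[of "eff N B t p (TG p)" N B ts] p unfolding ST_def by simp
qed

lemma inv: "p \<in> nodes t \<Longrightarrow> fst (TG p) \<le> N \<and> snd (TG p) \<le> N \<and> (p \<noteq> [] \<longrightarrow> dp N B (subtree t p) (fst (TG p)) (snd (TG p)) \<noteq> \<infinity>)"
proof (induction p rule: rev_induct)
  case Nil then show ?case by simp
next
  case (snoc i p)
  obtain b ts where p: "p \<in> nodes t" "subtree t p = Switch b ts" "i < length ts"
    using nodes_parent[OF snoc.prems] by blast
  let ?e = "eff N B t p (TG p)"
  let ?ct = "snd (CH N B ts ?e)"
  have c: "chainP N B ts (length ts) ?e (ST p) ?ct" using inv_step[OF p(1,2)] snoc.IH p by blast
  have tg: "TG (p @ [i]) = ?ct i" using tgf_snoc[of t p b ts N B i] p by (simp add: nodes_def)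
  have sub: "subtree t (p @ [i]) = ts ! i" using nodes_child[OF p] by blast
  let ?P = "\<lambda>k. partial N B ts k (fst (ST p k)) (snd (ST p k))"
  let ?Q = "\<lambda>k. dp N B (ts ! k) (fst (?ct k)) (snd (?ct k))"
  have tel: "?P (length ts) = ?P 0 + (\<Sum>k<length ts. ?Q k)"
    by (rule telescope) (use c in \<open>simp add: chainP_def\<close>)
  have "?P (length ts) \<noteq> \<infinity>"
  proof -
    have "ST p (length ts) = ?e" using c by (simp add: chainP_def)
    moreover have "partial N B ts (length ts) (fst ?e) (snd ?e) \<noteq> \<infinity>"
    proof (cases "p = []")
      case True then show ?thesis using fin p by (simp add: eff_def)
    next
      case False
      have bb: "bw t p = b" using p by (simp add: bw_def)
      have "dp N B (Switch b ts) (fst (TG p)) (snd (TG p)) \<noteq> \<infinity>" using snoc.IH p False by simp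
      then show ?thesis using False bb by (simp add: eff_def dp_Switch del: dp.simps)
    qed
    ultimately show ?thesis by simp
  qed
  then have "(\<Sum>k<length ts. ?Q k) \<noteq> \<infinity>" using tel by (simp add: plus_eq_infty_iff_enat)
  then have "?Q i \<noteq> \<infinity>" using sum_enat_fin[of "{..<length ts}" ?Q i] p(3) by simp
  moreover have "fst (?ct i) \<le> N \<and> snd (?ct i) \<le> N" using c p(3) by (simp add: chainP_def)
  ultimately show ?case using tg sub by simp
qed

lemma is_run: "bt_run N B t TG ST"
  unfolding bt_run_def
proof (rule conjI)
  show "TG [] = (N, N)" by simp
next
  show "\<forall>p\<in>nodes t. \<forall>b ts. subtree t p = Switch b ts \<longrightarrow>
        ST p (length ts) = eff N B t p (TG p) \<and>
        (\<forall>k < length ts.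
           fst (ST p k) \<le> N \<and> snd (ST p k) \<le> N \<and>
           fst (TG (p @ [k])) \<le> N \<and> snd (TG (p @ [k])) \<le> N \<and>
           fst (ST p (Suc k)) \<le> fst (ST p k) + fst (TG (p @ [k])) \<and>
           snd (ST p (Suc k)) \<le> min (fst (ST p k) + snd (TG (p @ [k])))
                                    (fst (TG (p @ [k])) + snd (ST p k)) \<and>
           partial N B ts k (fst (ST p k)) (snd (ST p k))
             + dp N B (ts ! k) (fst (TG (p @ [k]))) (snd (TG (p @ [k])))
           = partial N B ts (Suc k) (fst (ST p (Suc k))) (snd (ST p (Suc k))))"
  proof (intro ballI allI impI)
  fix p b ts assume p: "p \<in> nodes t" "subtree t p = Switch b ts"
  have c: "chainP N B ts (length ts) (eff N B t p (TG p)) (ST p) (snd (CH N B ts (eff N B t p (TG p))))"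
    using inv_step[OF p inv[OF p(1)]] .
  have tg: "TG (p @ [k]) = snd (CH N B ts (eff N B t p (TG p))) k" for k
    using tgf_snoc[of t p b ts N B k] p by (simp add: nodes_def)
  show "ST p (length ts) = eff N B t p (TG p) \<and>
        (\<forall>k < length ts.
           fst (ST p k) \<le> N \<and> snd (ST p k) \<le> N \<and>
           fst (TG (p @ [k])) \<le> N \<and> snd (TG (p @ [k])) \<le> N \<and>
           fst (ST p (Suc k)) \<le> fst (ST p k) + fst (TG (p @ [k])) \<and>
           snd (ST p (Suc k)) \<le> min (fst (ST p k) + snd (TG (p @ [k])))
                                    (fst (TG (p @ [k])) + snd (ST p k)) \<and>
           partial N B ts k (fst (ST p k)) (snd (ST p k))
             + dp N B (ts ! k) (fst (TG (p @ [k]))) (snd (TG (p @ [k])))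
           = partial N B ts (Suc k) (fst (ST p (Suc k))) (snd (ST p (Suc k))))"
    using c unfolding chainP_def tg by blast
  qed
qed

lemma output_exists: "\<exists>R. alg1_output N B t R"
proof -
  define Cs where "Cs h = the_enat (dp N B (subtree t h) (fst (TG h)) (snd (TG h)))" for h
  define Bs where "Bs v = hose N B (eff N B t v (TG v))" for v
  have "\<forall>h\<in>pms t. enat (Cs h) = dp N B (subtree t h) (fst (TG h)) (snd (TG h))"
  proof
    fix h assume h: "h \<in> pms t"
    have "h \<noteq> []"
    proof
      assume "h = []"
      then have "is_pm t" using h by (simp add: pms_def)
      then show False using wf by (simp add: wf_substrate_def)
    qed
    then have "dp N B (subtree t h) (fst (TG h)) (snd (TG h)) \<noteq> \<infinity>" using inv h pms_sub_nodes by blast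
    then show "enat (Cs h) = dp N B (subtree t h) (fst (TG h)) (snd (TG h))"
      unfolding Cs_def by auto
  qed
  then have "alg1_output N B t (Some (Cs, Bs))"
    unfolding alg1_output_def using fin is_run by (auto simp: Bs_def)
  then show ?thesis by blast
qed

end

theorem theorem1:
  fixes t :: stree and N :: nat and B :: real
  assumes "wf_substrate t" and "0 < N" and "0 < B"
  shows "(\<exists>R. alg1_output N B t R) \<and>
         (\<forall>R. alg1_output N B t R \<longrightarrow>
            (if (\<exists>Cs Bs. is_svce N B t Cs Bs)
             then (\<exists>Cs Bs. R = Some (Cs, Bs) \<and> optimal_svce N B t Cs Bs)
             else R = None))"
proof (cases "root_tbl N B t N N = \<infinity>")
  case True
  have ex: "\<exists>R. alg1_output N B t R" using True by (simp add: alg1_output_def)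
  have noS: "\<not> (\<exists>Cs Bs. is_svce N B t Cs Bs)"
  proof
    assume "\<exists>Cs Bs. is_svce N B t Cs Bs"
    then obtain Cs Bs where "is_svce N B t Cs Bs" by blast
    then have "root_tbl N B t N N \<le> enat (\<Sum>h\<in>pms t. Cs h)" using root_LB assms by blast
    then show False using True by simp
  qed
  show ?thesis using ex noS True by (simp add: alg1_output_def)
next
  case False
  interpret finroot N B t using assms False by unfold_locales auto
  have ex: "\<exists>R. alg1_output N B t R" by (rule output_exists)
  have "\<exists>Cs Bs. R = Some (Cs, Bs) \<and> optimal_svce N B t Cs Bs" if R: "alg1_output N B t R" for R
  proof -
    obtain Cs Bs tg st where o: "R = Some (Cs, Bs)" "bt_run N B t tg st"
      "\<forall>h \<in> pms t. enat (Cs h) = dp N B (subtree t h) (fst (tg h)) (snd (tg h))"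
      "\<forall>v \<in> nodes t - {[]}. Bs v = hose N B (eff N B t v (tg v))"
      using R False unfolding alg1_output_def by auto
    interpret run N B t tg st Cs Bs using assms False o by unfold_locales auto
    have "optimal_svce N B t Cs Bs"
      unfolding optimal_svce_def
    proof (intro conjI allI impI)
      show "is_svce N B t Cs Bs" by (rule svce)
      fix Cs' Bs' assume "is_svce N B t Cs' Bs'"
      then have "root_tbl N B t N N \<le> enat (\<Sum>h\<in>pms t. Cs' h)" using root_LB assms by blast
      then have "enat (\<Sum>h\<in>pms t. Cs h) \<le> enat (\<Sum>h\<in>pms t. Cs' h)" using total_cost by simp
      then show "(\<Sum>h\<in>pms t. Cs h) \<le> (\<Sum>h\<in>pms t. Cs' h)" by simp
    qed
    then show ?thesis using o by blast
  qed
  moreover have "\<exists>Cs Bs. is_svce N B t Cs Bs"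
  proof -
    obtain R where "alg1_output N B t R" using ex by blast
    then show ?thesis using calculation unfolding optimal_svce_def by blast
  qed
  ultimately show ?thesis using ex by auto
qed


end
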